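(* For every $\rho\in\mathcal D(\mathcal H_V)$ with $\mathrm{Tr}(\rho)=1$ there exists a quantum while-program $S^\rho$ such that $\llbracket S^\rho\rrbracket(\sigma)=\mathrm{Tr}(\sigma)\,\rho$ for all $\sigma\in\mathcal D(\mathcal H_V)$. Consequently, for any abstraction map $\alpha:\mathcal Q\to\mathcal A$ into a well-structured abstract domain, any program $S$ and any $R\subseteq\mathcal D(\mathcal H_V)$ with $R\neq\{0\}$, $\alpha(\llbracket S^\rho;S\rrbracket(R))=\alpha(\llbracket S\rrbracket(\{\rho\}))$.
   Context: Fix a finite set $V$ of quantum variables, each a qubit with state space $\mathcal H_q\cong\mathbb C^2$; for $W\subseteq V$, $\mathcal H_W=\bigotimes_{q\in W}\mathcal H_q$. Operators and subspaces on $\mathcal H_W$ are identified with their cylindrical extensions to $\mathcal H_V$, and a subspace is identified with its orthogonal projector; $P^\perp$ is the orthocomplement. $\mathcal D(\mathcal H_V)$ is the set of partial density operators (positive, trace $\le1$). Programs: $S::=\mathbf{skip}\mid \bar q:=|0\rangle\mid \bar q\mathrel{*{=}}U\mid \mathbf{assert}\ P[\bar q]\mid S_0;S_1\mid \mathbf{if}\ P[\bar q]\ \mathbf{then}\ S_1\ \mathbf{else}\ S_0\ \mathbf{end}\mid\mathbf{while}\ P[\bar q]\ \mathbf{do}\ S\ \mathbf{end}$, with $\bar q=q_1,\dots,q_t$ distinct variables, $U$ unitary on $\mathcal H_{\bar q}$, $P$ a subspace of $\mathcal H_{\bar q}$. Semantics $\llbracket S\rrbracket:\mathcal D(\mathcal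 H_V)\to\mathcal D(\mathcal H_V)$: $\llbracket\mathbf{skip}\rrbracket(\rho)=\rho$; $\llbracket\bar q:=|0\rangle\rrbracket(\rho)=\sum_{i=0}^{2^t-1}|0\rangle_{\bar q}\langle i|\rho|i\rangle_{\bar q}\langle0|$; $\llbracket\bar q\mathrel{*{=}}U\rrbracket(\rho)=U\rho U^\dagger$; $\llbracket\mathbf{assert}\ P[\bar q]\rrbracket(\rho)=P\rho P$; $\llbracket S_0;S_1\rrbracket=\llbracket S_1\rrbracket\circ\llbracket S_0\rrbracket$; $\llbracket\mathbf{if}\ P[\bar q]\ \mathbf{then}\ S_1\ \mathbf{else}\ S_0\ \mathbf{end}\rrbracket(\rho)=\llbracket\mathbf{assert}\ P[\bar q];S_1\rrbracket(\rho)+\llbracket\mathbf{assert}\ P^\perp[\bar q];S_0\rrbracket(\rho)$; $\llbracket\mathbf{while}\ P[\bar q]\ \mathbf{do}\ S\ \mathbf{end}\rrbracket(\rho)=\sum_{i\ge0}\llbracket(\mathbf{assert}\ P[\bar q];S)^i;\mathbf{assert}\ P^\perp[\bar q]\rrbracket(\rho)$, where $T^i$ is $i$-fold sequential composition ($T^0=\mathbf{skip}$). $\mathcal Q=2^{\mathcal D(\mathcal H_V)}$ ordered by inclusion, $\llbracket S\rrbracket(R)=\{\llbracket S\rrbracket(\rho):\rho\in R\}$. A pair of monotone maps $(\alpha,\gamma)$ is a Galois connection if $c\le\gamma(a)\iff\alpha(c)\le a$, a Galois embedding if moreover $\alpha\circ\gamma=\mathrm{id}$. A complete lattice $\mathcal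 A$ with monotone $\alpha:\mathcal Q\to\mathcal A$, $\gamma:\mathcal A\to\mathcal Q$ is a well-structured abstract domain if (a) $(\alpha,\gamma)$ is a Galois embedding and (b) for any $\rho_i\in\mathcal D(\mathcal H_V)$, reals $x_i>0$ with $\sum_ix_i\rho_i\in\mathcal D(\mathcal H_V)$, $\alpha(\sum_ix_i\rho_i)=\bigvee_i\alpha(\{\rho_i\})$. *)

theory Defs
  imports Complex_Main
begin

text \<open>The set V of quantum variables is the finite type 'v. Computational basis
states of H_V are assignments 'v \<Rightarrow> bool (False = |0>, True = |1>).\<close>

type_synonym 'v bst = "'v \<Rightarrow> bool"
type_synonym 'v mat = "'v bst \<Rightarrow> 'v bst \<Rightarrow> complex"

definition mmult :: "('v::finite) mat \<Rightarrow> 'v mat \<Rightarrow> 'v mat" (infixl "**" 70) where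
  "A ** B = (\<lambda>s s'. \<Sum>t\<in>UNIV. A s t * B t s')"

definition madj :: "'v mat \<Rightarrow> 'v mat" where
  "madj A = (\<lambda>s s'. cnj (A s' s))"

definition madd :: "'v mat \<Rightarrow> 'v mat \<Rightarrow> 'v mat" where
  "madd A B = (\<lambda>s s'. A s s' + B s s')"

definition msub :: "'v mat \<Rightarrow> 'v mat \<Rightarrow> 'v mat" where
  "msub A B = (\<lambda>s s'. A s s' - B s s')"

definition mscale :: "complex \<Rightarrow> 'v mat \<Rightarrow> 'v mat" where
  "mscale c A = (\<lambda>s s'. c * A s s')"

definition mzero :: "'v mat" where
  "mzero = (\<lambda>s s'. 0)"

definition msum :: "'i set \<Rightarrow> ('i \<Rightarrow> 'v mat) \<Rightarrow> 'v mat" where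
  "msum I f = (\<lambda>s s'. \<Sum>i\<in>I. f i s s')"

definition mtrace :: "('v::finite) mat \<Rightarrow> complex" where
  "mtrace A = (\<Sum>s\<in>UNIV. A s s)"

definition positive :: "('v::finite) mat \<Rightarrow> bool" where
  "positive A \<longleftrightarrow> (\<forall>v :: 'v bst \<Rightarrow> complex.
      Im (\<Sum>s\<in>UNIV. \<Sum>s'\<in>UNIV. cnj (v s) * A s s' * v s') = 0 \<and>
      Re (\<Sum>s\<in>UNIV. \<Sum>s'\<in>UNIV. cnj (v s) * A s s' * v s') \<ge> 0)"

definition pdo :: "('v::finite) mat set" where
  "pdo = {\<rho>. positive \<rho> \<and> Re (mtrace \<rho>) \<le> 1}"

text \<open>Subsystems: basis states of H_W are assignments vanishing outside W;
restriction of an assignment to W.\<close>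
definition states :: "'v set \<Rightarrow> 'v bst set" where
  "states W = {s. \<forall>x. x \<notin> W \<longrightarrow> \<not> s x}"

definition restr :: "'v set \<Rightarrow> 'v bst \<Rightarrow> 'v bst" where
  "restr W s = (\<lambda>x. if x \<in> W then s x else False)"

text \<open>An operator on H_W is a matrix supported on states W.\<close>
definition supported :: "'v set \<Rightarrow> 'v mat \<Rightarrow> bool" where
  "supported W A \<longleftrightarrow> (\<forall>s s'. (s \<notin> states W \<or> s' \<notin> states W) \<longrightarrow> A s s' = 0)"

definition idW :: "'v set \<Rightarrow> 'v mat" where
  "idW W = (\<lambda>s s'. if s = s' \<and> s \<in> states W then 1 else 0)"

text \<open>Cylindrical extension of an operator on H_W to H_V (tensor with identity).\<close>
definition cyl :: "'v set \<Rightarrow> 'v mat \<Rightarrow> 'v mat" where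
  "cyl W A = (\<lambda>s s'. if restr (- W) s = restr (- W) s' then A (restr W s) (restr W s') else 0)"

definition unitary_on :: "('v::finite) set \<Rightarrow> 'v mat \<Rightarrow> bool" where
  "unitary_on W U \<longleftrightarrow> supported W U \<and> U ** madj U = idW W \<and> madj U ** U = idW W"

text \<open>Subspaces of H_W are identified with their orthogonal projectors.\<close>
definition projector_on :: "('v::finite) set \<Rightarrow> 'v mat \<Rightarrow> bool" where
  "projector_on W P \<longleftrightarrow> supported W P \<and> P ** P = P \<and> madj P = P"

definition orth :: "'v set \<Rightarrow> 'v mat \<Rightarrow> 'v mat" where
  "orth W P = msub (idW W) P"

definition ketbra :: "'v bst \<Rightarrow> 'v bst \<Rightarrow> 'v mat" where
  "ketbra a b = (\<lambda>s s'. if s = a \<and> s' = b then 1 else 0)"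

datatype 'v prog =
    Skip
  | Init "'v list"
  | Apply "'v list" "'v mat"
  | Assert "'v list" "'v mat"
  | Seq "'v prog" "'v prog"
  | If "'v list" "'v mat" "'v prog" "'v prog"
  | While "'v list" "'v mat" "'v prog"

fun wf_prog :: "('v::finite) prog \<Rightarrow> bool" where
  "wf_prog Skip = True"
| "wf_prog (Init qs) = distinct qs"
| "wf_prog (Apply qs U) = (distinct qs \<and> unitary_on (set qs) U)"
| "wf_prog (Assert qs P) = (distinct qs \<and> projector_on (set qs) P)"
| "wf_prog (Seq S0 S1) = (wf_prog S0 \<and> wf_prog S1)"
| "wf_prog (If qs P S1 S0) = (distinct qs \<and> projector_on (set qs) P \<and> wf_prog S1 \<and> wf_prog S0)"
| "wf_prog (While qs P S) = (distinct qs \<and> projector_on (set qs) P \<and> wf_prog S)"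

definition sem_assert :: "('v::finite) list \<Rightarrow> 'v mat \<Rightarrow> 'v mat \<Rightarrow> 'v mat" where
  "sem_assert qs P \<rho> = cyl (set qs) P ** \<rho> ** cyl (set qs) P"

definition sem_init :: "('v::finite) list \<Rightarrow> 'v mat \<Rightarrow> 'v mat" where
  "sem_init qs \<rho> = msum (states (set qs))
     (\<lambda>i. cyl (set qs) (ketbra (\<lambda>_. False) i) ** \<rho> ** madj (cyl (set qs) (ketbra (\<lambda>_. False) i)))"

primrec sem :: "('v::finite) prog \<Rightarrow> 'v mat \<Rightarrow> 'v mat" where
  "sem Skip \<rho> = \<rho>"
| "sem (Init qs) \<rho> = sem_init qs \<rho>"
| "sem (Apply qs U) \<rho> = cyl (set qs) U ** \<rho> ** madj (cyl (set qs) U)"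
| "sem (Assert qs P) \<rho> = sem_assert qs P \<rho>"
| "sem (Seq S0 S1) \<rho> = sem S1 (sem S0 \<rho>)"
| "sem (If qs P S1 S0) \<rho> =
     madd (sem S1 (sem_assert qs P \<rho>)) (sem S0 (sem_assert qs (orth (set qs) P) \<rho>))"
| "sem (While qs P S) \<rho> =
     (\<lambda>s s'. \<Sum>i. sem_assert qs (orth (set qs) P)
                   (((\<lambda>\<sigma>. sem S (sem_assert qs P \<sigma>)) ^^ i) \<rho>) s s')"

text \<open>Well-structured abstract domain: Q = 2^pdo, A a complete lattice.\<close>
definition galois_embedding :: "(('v::finite) mat set \<Rightarrow> 'a::complete_lattice) \<Rightarrow> ('a \<Rightarrow> 'v mat set) \<Rightarrow> bool" where
  "galois_embedding \<alpha> \<gamma> \<longleftrightarrow>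
     (\<forall>c1 c2. c1 \<subseteq> c2 \<and> c2 \<subseteq> pdo \<longrightarrow> \<alpha> c1 \<le> \<alpha> c2) \<and>
     (\<forall>a. \<gamma> a \<subseteq> pdo) \<and>
     mono \<gamma> \<and>
     (\<forall>c a. c \<subseteq> pdo \<longrightarrow> (c \<subseteq> \<gamma> a \<longleftrightarrow> \<alpha> c \<le> a)) \<and>
     (\<forall>a. \<alpha> (\<gamma> a) = a)"

definition well_structured :: "(('v::finite) mat set \<Rightarrow> 'a::complete_lattice) \<Rightarrow> ('a \<Rightarrow> 'v mat set) \<Rightarrow> bool" where
  "well_structured \<alpha> \<gamma> \<longleftrightarrow> galois_embedding \<alpha> \<gamma> \<and>
     (\<forall>(I::nat set) \<rho>s (x::nat \<Rightarrow> real). finite I \<and> I \<noteq> {} \<and>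
        (\<forall>i\<in>I. \<rho>s i \<in> pdo \<and> x i > 0) \<and>
        msum I (\<lambda>i. mscale (complex_of_real (x i)) (\<rho>s i)) \<in> pdo \<longrightarrow>
        \<alpha> {msum I (\<lambda>i. mscale (complex_of_real (x i)) (\<rho>s i))} = (SUP i\<in>I. \<alpha> {\<rho>s i}))"

end

theory Submission
  imports Defs
begin


definition mid :: "('v::finite) mat" where "mid = (\<lambda>s s'. if s = s' then 1 else 0)"
definition rtr :: "('v::finite) mat \<Rightarrow> real" where "rtr A = Re (mtrace A)"
definition sf :: "('v::finite) mat \<Rightarrow> ('v bst \<Rightarrow> complex) \<Rightarrow> ('v bst \<Rightarrow> complex) \<Rightarrow> complex" where
  "sf A u v = (\<Sum>s\<in>UNIV. \<Sum>s'\<in>UNIV. cnj (u s) * A s s' * v s')"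

lemma positive_sf: "positive A \<longleftrightarrow> (\<forall>v. Im (sf A v v) = 0 \<and> Re (sf A v v) \<ge> 0)"
  by (simp add: positive_def sf_def)

lemma mmult_assoc: "((A::('v::finite) mat) ** B) ** C = A ** (B ** C)"
  unfolding mmult_def
  by (rule ext, rule ext) (simp add: sum_distrib_left sum_distrib_right mult.assoc, rule sum.swap)

lemma madj_madj[simp]: "madj (madj A) = A"
  by (simp add: madj_def)

lemma madj_mmult: "madj ((A::('v::finite) mat) ** B) = madj B ** madj A"
  unfolding madj_def mmult_def by (rule ext, rule ext) (simp add: mult.commute)

lemma mtrace_comm: "mtrace ((A::('v::finite) mat) ** B) = mtrace (B ** A)"
  unfolding mtrace_def mmult_def
  by (subst sum.swap) (simp add: mult.commute)

lemma sum_delta_l[simp]: "(\<Sum>t\<in>UNIV. (if s = t then 1 else 0) * f t) = (f (s::('v::finite) bst) :: complex)"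
proof -
  have "(\<Sum>t\<in>UNIV. (if s = t then 1 else 0) * f t) = (\<Sum>t\<in>UNIV. if s = t then f t else 0)"
    by (rule sum.cong) auto
  then show ?thesis by simp
qed

lemma sum_delta_r[simp]: "(\<Sum>t\<in>UNIV. f t * (if t = s then 1 else 0)) = (f (s::('v::finite) bst) :: complex)"
proof -
  have "(\<Sum>t\<in>UNIV. f t * (if t = s then 1 else 0)) = (\<Sum>t\<in>UNIV. if t = s then f t else 0)"
    by (rule sum.cong) auto
  then show ?thesis by simp
qed

lemma mid_mmult[simp]: "mid ** (A::('v::finite) mat) = A"
  unfolding mid_def mmult_def by (rule ext, rule ext) simp

lemma mmult_mid[simp]: "(A::('v::finite) mat) ** mid = A"
  unfolding mid_def mmult_def by (rule ext, rule ext) simp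

lemma madj_mid[simp]: "madj mid = mid"
  unfolding mid_def madj_def by (rule ext, rule ext) auto

lemma mmult_msub_left: "msub A B ** (C::('v::finite) mat) = msub (A ** C) (B ** C)"
  unfolding msub_def mmult_def by (simp add: left_diff_distrib sum_subtractf)

lemma mmult_msub_right: "(C::('v::finite) mat) ** msub A B = msub (C ** A) (C ** B)"
  unfolding msub_def mmult_def by (simp add: right_diff_distrib sum_subtractf)

lemma mmult_madd_left: "madd A B ** (C::('v::finite) mat) = madd (A ** C) (B ** C)"
  unfolding madd_def mmult_def by (simp add: distrib_right sum.distrib)

lemma mmult_madd_right: "(C::('v::finite) mat) ** madd A B = madd (C ** A) (C ** B)"
  unfolding madd_def mmult_def by (simp add: distrib_left sum.distrib)

lemma mmult_mscale_left: "mscale c A ** (C::('v::finite) mat) = mscale c (A ** C)"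
  unfolding mscale_def mmult_def by (simp add: sum_distrib_left mult.assoc)

lemma mmult_mscale_right: "(C::('v::finite) mat) ** mscale c A = mscale c (C ** A)"
  unfolding mscale_def mmult_def by (simp add: sum_distrib_left mult.assoc mult.left_commute)

lemma madj_msub: "madj (msub A B) = msub (madj A) (madj B)"
  unfolding madj_def msub_def by auto

lemma mtrace_msub: "mtrace (msub A (B::('v::finite) mat)) = mtrace A - mtrace B"
  unfolding mtrace_def msub_def by (simp add: sum_subtractf)

lemma mtrace_madd: "mtrace (madd A (B::('v::finite) mat)) = mtrace A + mtrace B"
  unfolding mtrace_def madd_def by (simp add: sum.distrib)

lemma mtrace_mscale: "mtrace (mscale c (B::('v::finite) mat)) = c * mtrace B"
  unfolding mtrace_def mscale_def by (simp add: sum_distrib_left)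

lemma msub_self_mid: "msub mid (msub mid (P::('v::finite) mat)) = P"
  unfolding msub_def by auto

definition mvec :: "('v::finite) mat \<Rightarrow> ('v bst \<Rightarrow> complex) \<Rightarrow> ('v bst \<Rightarrow> complex)" where
  "mvec M v = (\<lambda>s. \<Sum>t\<in>UNIV. M s t * v t)"

definition ip :: "('v::finite bst \<Rightarrow> complex) \<Rightarrow> ('v bst \<Rightarrow> complex) \<Rightarrow> complex" where
  "ip u x = (\<Sum>s\<in>UNIV. cnj (u s) * x s)"

lemma sf_ip: "sf A u v = ip u (mvec A v)"
  unfolding sf_def ip_def mvec_def by (simp add: sum_distrib_left mult.assoc)

lemma mvec_mmult: "mvec ((A::('v::finite) mat) ** B) v = mvec A (mvec B v)"
  unfolding mvec_def mmult_def
  by (rule ext) (simp add: sum_distrib_left sum_distrib_right mult.assoc, rule sum.swap)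

lemma ip_mvec: "ip u (mvec M x) = ip (mvec (madj M) u) x"
  unfolding ip_def mvec_def madj_def
  by (simp add: sum_distrib_left sum_distrib_right mult.assoc mult.left_commute, rule sum.swap)

lemma sf_conj: "sf (M ** A ** madj M) v v = sf A (mvec (madj M) v) (mvec (madj M) v)"
  by (simp add: sf_ip mvec_mmult ip_mvec)

lemma positive_conj: "positive A \<Longrightarrow> positive (M ** A ** madj M)"
  unfolding positive_sf using sf_conj by metis

lemma positive_madd: "positive A \<Longrightarrow> positive B \<Longrightarrow> positive (madd A B)"
proof -
  have "sf (madd A B) v v = sf A v v + sf B v v" for v
    unfolding sf_def madd_def by (simp add: distrib_left distrib_right sum.distrib)
  then show "positive A \<Longrightarrow> positive B \<Longrightarrow> positive (madd A B)"
    unfolding positive_sf by simp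
qed

lemma positive_mscale: "positive A \<Longrightarrow> c \<ge> 0 \<Longrightarrow> positive (mscale (complex_of_real c) A)"
proof -
  have "sf (mscale (complex_of_real c) A) v v = complex_of_real c * sf A v v" for v
    unfolding sf_def mscale_def by (simp add: sum_distrib_left mult.assoc mult.left_commute)
  then show "positive A \<Longrightarrow> c \<ge> 0 \<Longrightarrow> ?thesis"
    unfolding positive_sf by simp
qed

lemma positive_msum: "finite I \<Longrightarrow> (\<And>i. i \<in> I \<Longrightarrow> positive (f i)) \<Longrightarrow> positive (msum I f)"
proof (induction I rule: finite_induct)
  case empty
  then show ?case unfolding positive_def msum_def by simp
next
  case (insert x F)
  have "msum (insert x F) f = madd (f x) (msum F f)"
    unfolding msum_def madd_def using insert by (simp add: sum.insert)
  then show ?case using insert positive_madd by auto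
qed


lemma if0_mult_r[simp]: "c * (if P then a else 0) = (if P then c * a else (0::complex))" by simp
lemma if0_mult_l[simp]: "(if P then a else 0) * c = (if P then a * c else (0::complex))" by simp

lemma cnj_if0[simp]: "cnj (if P then a else 0) = (if P then cnj a else 0)" by simp

lemma nsq: "x * cnj x = complex_of_real (cmod x) * complex_of_real (cmod x)"
  by (metis complex_norm_square of_real_mult power2_eq_square)

lemma sf_two:
  fixes A :: "('v::finite) mat"
  shows "sf A (\<lambda>x. (if x = s then a else 0) + (if x = t then b else 0)) (\<lambda>x. (if x = s then a else 0) + (if x = t then b else 0))
   = cnj a * a * A s s + cnj a * b * A s t + cnj b * a * A t s + cnj b * b * A t t"
proof -
  have mv: "mvec A (\<lambda>x. (if x = s then a else 0) + (if x = t then b else 0)) = (\<lambda>y. A y s * a + A y t * b)"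
    unfolding mvec_def by (rule ext) (simp add: distrib_left sum.distrib)
  have "ip (\<lambda>x. (if x = s then a else 0) + (if x = t then b else 0)) y = cnj a * y s + cnj b * y t" for y
    unfolding ip_def by (simp add: distrib_right sum.distrib)
  then show ?thesis unfolding sf_ip mv by (simp add: algebra_simps)
qed

lemma pos_diag:
  fixes A :: "('v::finite) mat"
  assumes "positive A" shows "Im (A s s) = 0" "Re (A s s) \<ge> 0"
proof -
  have "sf A (\<lambda>x. (if x = s then 1 else 0) + (if x = s then 0 else 0)) (\<lambda>x. (if x = s then 1 else 0) + (if x = s then 0 else 0)) = A s s"
    by (subst sf_two) simp
  then show "Im (A s s) = 0" "Re (A s s) \<ge> 0" using assms unfolding positive_sf by metis+
qed

lemma pos_sf: "positive A \<Longrightarrow> Im (sf A v v) = 0 \<and> Re (sf A v v) \<ge> 0"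
  unfolding positive_sf by blast

lemma pos_herm:
  fixes A :: "('v::finite) mat"
  assumes "positive A" shows "A t s = cnj (A s t)"
proof -
  define v1 where "v1 = (\<lambda>x. (if x = s then 1 else 0) + (if x = t then (1::complex) else 0))"
  define v2 where "v2 = (\<lambda>x. (if x = s then 1 else 0) + (if x = t then \<i> else 0))"
  have e1: "sf A v1 v1 = A s s + A s t + A t s + A t t"
    unfolding v1_def by (subst sf_two) simp
  have 1: "Im (A s s + A s t + A t s + A t t) = 0"
    using pos_sf[OF assms, of v1] unfolding e1 by simp
  have e2: "sf A v2 v2 = A s s + \<i> * A s t - \<i> * A t s + A t t"
    unfolding v2_def by (subst sf_two) simp
  have "Im (A s s + \<i> * A s t - \<i> * A t s + A t t) = 0"
    using pos_sf[OF assms, of v2] unfolding e2 by simp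
  then have 2: "Re (A s t) - Re (A t s) = 0" using pos_diag[OF assms] by simp
  have 3: "Im (A s t) + Im (A t s) = 0" using 1 pos_diag[OF assms, of s] pos_diag[OF assms, of t] by simp
  show ?thesis apply (rule complex_eqI) using 2 3 by simp_all
qed


lemma pos_quad:
  fixes A :: "('v::finite) mat"
  assumes "positive A" "A s t \<noteq> 0" "r \<ge> 0"
  shows "r^2 * Re (A s s) - 2 * r * cmod (A s t) + Re (A t t) \<ge> 0"
proof -
  define x where "x = A s t"
  define b where "b = - (cnj x / complex_of_real (cmod x))"
  have xn: "cmod x > 0" using assms x_def by simp
  have bx: "b * x = - complex_of_real (cmod x)"
    unfolding b_def using xn
    apply (simp add: field_simps) by (rule nsq)
  have cbx: "cnj b * cnj x = - complex_of_real (cmod x)"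
    using arg_cong[OF bx, of cnj] by simp
  have bb: "cnj b * b = 1"
    unfolding b_def using xn
    apply (simp add: field_simps) by (rule nsq)
  have herm: "A t s = cnj x" unfolding x_def by (rule pos_herm[OF assms(1)])
  define v where "v = (\<lambda>y. (if y = s then of_real r else 0) + (if y = t then b else 0))"
  have "sf A v v
     = of_real (r^2) * A s s + of_real r * (b * x) + of_real r * (cnj b * cnj x) + (cnj b * b) * A t t"
    unfolding v_def by (subst sf_two) (simp add: herm x_def[symmetric] algebra_simps power2_eq_square)
  also have "\<dots> = of_real (r^2) * A s s - 2 * of_real r * of_real (cmod x) + A t t"
    using bx cbx bb by simp
  also have "\<dots> = of_real (r^2 * Re (A s s) - 2 * r * cmod x + Re (A t t))"
    using pos_diag[OF assms(1), of s] pos_diag[OF assms(1), of t] by (simp add: complex_eq_iff)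
  finally have "Re (sf A v v) = r^2 * Re (A s s) - 2 * r * cmod x + Re (A t t)" by simp
  then show ?thesis using pos_sf[OF assms(1), of v] unfolding x_def by simp
qed


lemma pos_entry_le:
  fixes A :: "('v::finite) mat"
  assumes "positive A" shows "2 * cmod (A s t) \<le> Re (A s s) + Re (A t t)"
proof (cases "A s t = 0")
  case True then show ?thesis using pos_diag[OF assms, of s] pos_diag[OF assms, of t] by simp
next
  case False then show ?thesis using pos_quad[where A=A and s=s and t=t and r=1, OF assms False] by simp
qed

lemma pos_zero_row:
  fixes A :: "('v::finite) mat"
  assumes "positive A" "A k k = 0" shows "A k j = 0"
proof (rule ccontr)
  assume ne: "A k j \<noteq> 0"
  define c where "c = cmod (A k j)"
  have c: "c > 0" using ne c_def by simp
  define r where "r = (Re (A j j) + 1) / (2 * c)"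
  have r: "r \<ge> 0" using pos_diag[OF assms(1), of j] c r_def by simp
  have "r^2 * Re (A k k) - 2 * r * c + Re (A j j) \<ge> 0" using pos_quad[where A=A and s=k and t=j and r=r, OF assms(1) ne r] c_def by simp
  moreover have "2 * r * c = Re (A j j) + 1" using c r_def by (simp add: field_simps)
  ultimately show False using assms(2) by simp
qed

lemma pos_zero_col:
  fixes A :: "('v::finite) mat"
  assumes "positive A" "A k k = 0" shows "A j k = 0"
proof -
  have "A j k = cnj (A k j)" by (rule pos_herm[OF assms(1)])
  then show ?thesis using pos_zero_row[where A=A and k=k and j=j, OF assms] by simp
qed

lemma rtr_nonneg:
  fixes A :: "('v::finite) mat"
  assumes "positive A" shows "rtr A \<ge> 0"
  unfolding rtr_def mtrace_def using pos_diag(2)[OF assms] by (simp add: sum_nonneg)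

lemma mtrace_real:
  fixes A :: "('v::finite) mat"
  assumes "positive A" shows "mtrace A = complex_of_real (rtr A)"
  unfolding rtr_def mtrace_def using pos_diag(1)[OF assms] by (simp add: complex_eq_iff)

lemma diag_le_rtr:
  fixes A :: "('v::finite) mat"
  assumes "positive A" shows "Re (A s s) \<le> rtr A"
proof -
  have "Re (A s s) = (\<Sum>x\<in>{s}. Re (A x x))" by simp
  also have "\<dots> \<le> (\<Sum>x\<in>UNIV. Re (A x x))"
    by (rule sum_mono2) (use pos_diag[OF assms] in auto)
  finally show ?thesis unfolding rtr_def mtrace_def by simp
qed

lemma entry_le_rtr:
  fixes A :: "('v::finite) mat"
  assumes "positive A" shows "cmod (A s t) \<le> rtr A"
proof (cases "s = t")
  case True
  then show ?thesis using pos_diag[OF assms, of s] diag_le_rtr[OF assms, of s]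
    by (simp add: cmod_eq_Re)
next
  case False
  have "Re (A s s) + Re (A t t) = (\<Sum>x\<in>{s,t}. Re (A x x))" using False by simp
  also have "\<dots> \<le> (\<Sum>x\<in>UNIV. Re (A x x))"
    by (rule sum_mono2) (use pos_diag[OF assms] in auto)
  finally have "Re (A s s) + Re (A t t) \<le> rtr A" unfolding rtr_def mtrace_def by simp
  then show ?thesis using pos_entry_le[OF assms, of s t] pos_diag[OF assms, of s] pos_diag[OF assms, of t]
    by simp
qed

lemma rtr_zero:
  fixes A :: "('v::finite) mat"
  assumes "positive A" "rtr A = 0" shows "A = mzero"
proof -
  have "\<forall>x\<in>UNIV. Re (A x x) = 0"
    using assms(2) unfolding rtr_def mtrace_def
    by (subst sum_nonneg_eq_0_iff[symmetric]) (use pos_diag[OF assms(1)] in auto)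
  then have "A x x = 0" for x using pos_diag[OF assms(1), of x] by (simp add: complex_eq_iff)
  then show ?thesis unfolding mzero_def using pos_zero_row[OF assms(1)] by (intro ext) blast
qed

lemma positive_mzero: "positive mzero"
  unfolding positive_def mzero_def by simp


lemma restr_in_states[simp]: "restr W s \<in> states W"
  unfolding restr_def states_def by auto

lemma sum_fiber:
  fixes f :: "('v::finite) bst \<Rightarrow> complex"
  shows "(\<Sum>t\<in>UNIV. if restr (-W) t = restr (-W) s then f (restr W t) else 0) = (\<Sum>u\<in>states W. f u)"
proof -
  have "(\<Sum>t\<in>UNIV. if restr (-W) t = restr (-W) s then f (restr W t) else 0)
      = (\<Sum>t\<in>{t. restr (-W) t = restr (-W) s}. f (restr W t))"
    by (simp add: sum.inter_filter[symmetric])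
  also have "\<dots> = (\<Sum>u\<in>states W. f u)"
  proof (rule sum.reindex_bij_betw)
    show "bij_betw (restr W) {t. restr (- W) t = restr (- W) s} (states W)"
    proof (rule bij_betw_byWitness[where f'="\<lambda>u x. if x \<in> W then u x else s x"])
      show "restr W ` {t. restr (- W) t = restr (- W) s} \<subseteq> states W" by auto
      show "(\<lambda>u x. if x \<in> W then u x else s x) ` states W \<subseteq> {t. restr (- W) t = restr (- W) s}"
        unfolding restr_def by (auto intro!: ext)
      show "\<forall>x\<in>{t. restr (- W) t = restr (- W) s}. (\<lambda>xa. if xa \<in> W then restr W x xa else s xa) = x"
        unfolding restr_def by (auto intro!: ext dest: fun_cong)
      show "\<forall>y\<in>states W. restr W (\<lambda>x. if x \<in> W then y x else s x) = y"
        unfolding restr_def states_def by (auto intro!: ext)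
    qed
  qed
  finally show ?thesis .
qed

lemma sum_states_UNIV:
  fixes g :: "('v::finite) bst \<Rightarrow> complex"
  assumes "\<And>u. u \<notin> states W \<Longrightarrow> g u = 0"
  shows "(\<Sum>u\<in>states W. g u) = (\<Sum>u\<in>UNIV. g u)"
  by (rule sum.mono_neutral_left) (use assms in auto)

lemma cyl_mult:
  fixes A B :: "('v::finite) mat"
  assumes "supported W A"
  shows "cyl W A ** cyl W B = cyl W (A ** B)"
proof (rule ext, rule ext)
  fix s s'
  show "(cyl W A ** cyl W B) s s' = cyl W (A ** B) s s'"
  proof (cases "restr (-W) s = restr (-W) s'")
    case False
    then show ?thesis unfolding cyl_def mmult_def by (auto intro!: sum.neutral)
  next
    case True
    have "(cyl W A ** cyl W B) s s' = (\<Sum>t\<in>UNIV. if restr (-W) t = restr (-W) s then A (restr W s) (restr W t) * B (restr W t) (restr W s') else 0)"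
      unfolding cyl_def mmult_def using True by (intro sum.cong) auto
    also have "\<dots> = (\<Sum>u\<in>states W. A (restr W s) u * B u (restr W s'))"
      by (rule sum_fiber)
    also have "\<dots> = (\<Sum>u\<in>UNIV. A (restr W s) u * B u (restr W s'))"
      using assms by (intro sum_states_UNIV[where g="\<lambda>u. A (restr W s) u * B u (restr W s')"]) (auto simp: supported_def)
    finally show ?thesis unfolding cyl_def mmult_def using True by simp
  qed
qed

lemma madj_cyl: "madj (cyl W A) = cyl W (madj A)"
  unfolding madj_def cyl_def by (intro ext) auto

lemma cyl_idW: "cyl W (idW W) = (mid :: ('v::finite) mat)"
proof (intro ext)
  fix s s' :: "'v bst"
  have "(restr (-W) s = restr (-W) s' \<and> restr W s = restr W s') \<longleftrightarrow> s = s'"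
    unfolding restr_def by (auto simp: fun_eq_iff) (meson ComplI)?
  then show "cyl W (idW W) s s' = mid s s'"
    unfolding cyl_def idW_def mid_def by auto
qed

lemma cyl_msub: "cyl W (msub A B) = msub (cyl W A) (cyl W B)"
  unfolding cyl_def msub_def by (intro ext) auto

lemma cyl_msum: "cyl W (msum I f) = msum I (\<lambda>i. cyl W (f i))"
  unfolding cyl_def msum_def by (intro ext) auto

lemma supported_madj: "supported W A \<Longrightarrow> supported W (madj A)"
  unfolding supported_def madj_def by auto

lemma supported_ketbra: "a \<in> states W \<Longrightarrow> b \<in> states W \<Longrightarrow> supported W (ketbra a b)"
  unfolding supported_def ketbra_def by auto

lemma ketbra_mult: "ketbra a b ** ketbra (b::('v::finite) bst) c = ketbra a c"
  unfolding ketbra_def mmult_def by (intro ext) (simp add: if_distrib[where f="\<lambda>x. x * _"] cong: if_cong)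

lemma madj_ketbra: "madj (ketbra a b) = ketbra b a"
  unfolding ketbra_def madj_def by (intro ext) auto

lemma msum_ketbra: "msum (states W) (\<lambda>i. ketbra i i) = (idW W :: ('v::finite) mat)"
proof (intro ext)
  fix s s' :: "'v bst"
  have "(\<Sum>i\<in>states W. if s = i \<and> s' = i then (1::complex) else 0) = (if s = s' \<and> s \<in> states W then 1 else 0)"
  proof (cases "s = s'")
    case True then show ?thesis by simp
  next
    case False then show ?thesis by (intro trans[OF sum.neutral]) auto
  qed
  then show "msum (states W) (\<lambda>i. ketbra i i) s s' = idW W s s'"
    unfolding msum_def ketbra_def idW_def by simp
qed

lemma mtrace_msum: "mtrace (msum I f) = (\<Sum>i\<in>I. mtrace ((f i)::('v::finite) mat))"
  unfolding mtrace_def msum_def by (rule sum.swap)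

lemma msum_mmult_left: "msum I f ** (C::('v::finite) mat) = msum I (\<lambda>i. f i ** C)"
  unfolding msum_def mmult_def by (intro ext) (simp add: sum_distrib_right, rule sum.swap)

lemma msum_mscale: "msum I (\<lambda>i. mscale c (f i)) = mscale c (msum I f)"
  unfolding msum_def mscale_def by (intro ext) (simp add: sum_distrib_left)

lemma madd_mscale: "madd (mscale c A) (mscale c B) = mscale c (madd A B)"
  unfolding madd_def mscale_def by (intro ext) (simp add: distrib_left)

lemma conj_mscale: "(M::('v::finite) mat) ** mscale c A ** N = mscale c (M ** A ** N)"
  by (simp add: mmult_mscale_left mmult_mscale_right)

lemma mtrace_conj: "mtrace ((M::('v::finite) mat) ** A ** madj M) = mtrace (madj M ** M ** A)"
  by (metis mmult_assoc mtrace_comm)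


lemma msum_cong: "(\<And>i. i \<in> I \<Longrightarrow> f i = g i) \<Longrightarrow> msum I f = msum I g"
  unfolding msum_def by (intro ext sum.cong) auto

lemma rtr_madd: "rtr (madd A (B::('v::finite) mat)) = rtr A + rtr B"
  unfolding rtr_def by (simp add: mtrace_madd)

lemma herm_proj_pos:
  fixes Q :: "('v::finite) mat"
  assumes "madj Q = Q" "positive \<rho>" shows "positive (Q ** \<rho> ** Q)"
  using positive_conj[OF assms(2), of Q] assms(1) by simp

lemma herm_proj_trace:
  fixes Q :: "('v::finite) mat"
  assumes "Q ** Q = Q" shows "mtrace (Q ** \<rho> ** Q) = mtrace (Q ** \<rho>)"
  by (metis assms mmult_assoc mtrace_comm)

lemma orth_props:
  fixes Q :: "('v::finite) mat"
  assumes "madj Q = Q" "Q ** Q = Q"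
  shows "madj (msub mid Q) = msub mid Q" "msub mid Q ** msub mid Q = msub mid Q"
proof -
  show "madj (msub mid Q) = msub mid Q" using assms(1) by (simp add: madj_msub)
  have "msub mid Q ** msub mid Q = msub (msub mid Q) (msub Q (Q ** Q))"
    by (simp add: mmult_msub_left mmult_msub_right)
  also have "\<dots> = msub mid Q" using assms(2) unfolding msub_def by (intro ext) simp
  finally show "msub mid Q ** msub mid Q = msub mid Q" .
qed

lemma proj_split:
  fixes Q :: "('v::finite) mat"
  assumes "madj Q = Q" "Q ** Q = Q"
  shows "rtr (Q ** \<rho> ** Q) + rtr (msub mid Q ** \<rho> ** msub mid Q) = rtr \<rho>"
proof -
  have "mtrace (Q ** \<rho> ** Q) + mtrace (msub mid Q ** \<rho> ** msub mid Q) = mtrace (Q ** \<rho>) + mtrace (msub mid Q ** \<rho>)"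
    using herm_proj_trace[OF assms(2)] herm_proj_trace[OF orth_props(2)[OF assms]] by simp
  also have "\<dots> = mtrace \<rho>" by (simp add: mmult_msub_left mtrace_msub)
  finally show ?thesis unfolding rtr_def by (metis plus_complex.sel(1))
qed

lemma cyl_proj:
  fixes P :: "('v::finite) mat"
  assumes "projector_on W P"
  shows "madj (cyl W P) = cyl W P" "cyl W P ** cyl W P = cyl W P" "cyl W (orth W P) = msub mid (cyl W P)"
  using assms unfolding projector_on_def
  by (simp_all add: madj_cyl cyl_mult orth_def cyl_msub cyl_idW)

lemma assert_props:
  fixes P :: "('v::finite) mat"
  assumes "projector_on (set qs) P" "positive \<rho>"
  shows "positive (sem_assert qs P \<rho>)" "positive (sem_assert qs (orth (set qs) P) \<rho>)"
    "rtr (sem_assert qs P \<rho>) + rtr (sem_assert qs (orth (set qs) P) \<rho>) = rtr \<rho>"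
  unfolding sem_assert_def cyl_proj(3)[OF assms(1)]
  using herm_proj_pos[OF cyl_proj(1)[OF assms(1)] assms(2)]
    herm_proj_pos[OF orth_props(1)[OF cyl_proj(1,2)[OF assms(1)]] assms(2)]
    proj_split[OF cyl_proj(1,2)[OF assms(1)]] by auto

lemma assert_scale: "sem_assert qs P (mscale c \<rho>) = mscale c (sem_assert qs P \<rho>)"
  unfolding sem_assert_def by (rule conj_mscale)

lemma unitary_cyl:
  fixes U :: "('v::finite) mat"
  assumes "unitary_on W U" shows "madj (cyl W U) ** cyl W U = mid"
  using assms unfolding unitary_on_def
  by (simp add: madj_cyl cyl_mult supported_madj cyl_idW)

lemma apply_props:
  fixes U :: "('v::finite) mat"
  assumes "unitary_on W U" "positive \<rho>"
  shows "positive (cyl W U ** \<rho> ** madj (cyl W U))" "rtr (cyl W U ** \<rho> ** madj (cyl W U)) = rtr \<rho>"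
  using positive_conj[OF assms(2)] apply simp
  unfolding rtr_def by (simp add: mtrace_conj unitary_cyl[OF assms(1)])

definition zst :: "'v bst" where "zst = (\<lambda>_. False)"

lemma zst_states[simp]: "zst \<in> states W" unfolding zst_def states_def by simp

lemma init_kraus:
  fixes W :: "('v::finite) set"
  shows "msum (states W) (\<lambda>i. madj (cyl W (ketbra (\<lambda>_. False) i)) ** cyl W (ketbra (\<lambda>_. False) i)) = mid"
proof -
  have "msum (states W) (\<lambda>i. madj (cyl W (ketbra (\<lambda>_. False) i)) ** cyl W (ketbra (\<lambda>_. False) i))
      = msum (states W) (\<lambda>i. cyl W (ketbra i i))"
  proof (rule msum_cong)
    fix i assume "i \<in> states W"
    then show "madj (cyl W (ketbra (\<lambda>_. False) i)) ** cyl W (ketbra (\<lambda>_. False) i) = cyl W (ketbra i i)"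
      using zst_states[of W] unfolding zst_def
      by (simp add: madj_cyl madj_ketbra cyl_mult supported_ketbra ketbra_mult)
  qed
  also have "\<dots> = mid" by (simp add: cyl_msum[symmetric] msum_ketbra cyl_idW)
  finally show ?thesis .
qed

lemma init_props:
  fixes qs :: "('v::finite) list"
  assumes "positive \<rho>"
  shows "positive (sem_init qs \<rho>)" "rtr (sem_init qs \<rho>) = rtr \<rho>"
    "sem_init qs (mscale c \<rho>) = mscale c (sem_init qs \<rho>)"
proof -
  show "positive (sem_init qs \<rho>)" unfolding sem_init_def
    by (rule positive_msum) (auto intro: positive_conj[OF assms])
  have "mtrace (sem_init qs \<rho>) = (\<Sum>i\<in>states (set qs). mtrace (madj (cyl (set qs) (ketbra (\<lambda>_. False) i)) ** cyl (set qs) (ketbra (\<lambda>_. False) i) ** \<rho>))"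
    unfolding sem_init_def mtrace_msum by (simp add: mtrace_conj)
  also have "\<dots> = mtrace (msum (states (set qs)) (\<lambda>i. madj (cyl (set qs) (ketbra (\<lambda>_. False) i)) ** cyl (set qs) (ketbra (\<lambda>_. False) i)) ** \<rho>)"
    by (simp add: msum_mmult_left mtrace_msum)
  also have "\<dots> = mtrace \<rho>" by (simp add: init_kraus)
  finally show "rtr (sem_init qs \<rho>) = rtr \<rho>" unfolding rtr_def by simp
  show "sem_init qs (mscale c \<rho>) = mscale c (sem_init qs \<rho>)"
    unfolding sem_init_def by (simp add: conj_mscale msum_mscale)
qed


lemma while_props:
  fixes F G :: "('v::finite) mat \<Rightarrow> 'v mat"
  assumes F: "\<And>\<sigma>. positive \<sigma> \<Longrightarrow> positive (F \<sigma>) \<and> positive (G \<sigma>) \<and> rtr (F \<sigma>) + rtr (G \<sigma>) \<le> rtr \<sigma>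
       \<and> (\<forall>c\<ge>0. F (mscale (of_real c) \<sigma>) = mscale (of_real c) (F \<sigma>))"
    and G: "\<And>\<sigma> c. G (mscale c \<sigma>) = mscale c (G \<sigma>)"
    and \<rho>: "positive \<rho>"
  defines "W \<equiv> (\<lambda>s s'. \<Sum>i. G ((F^^i) \<rho>) s s')"
  shows "positive W \<and> rtr W \<le> rtr \<rho> \<and>
     (\<forall>c\<ge>0. (\<lambda>s s'. \<Sum>i. G ((F^^i) (mscale (of_real c) \<rho>)) s s') = mscale (of_real c) W)"
proof -
  define E where "E i = G ((F^^i) \<rho>)" for i
  have posF: "positive ((F^^i) \<rho>)" for i
    by (induction i) (use \<rho> F in auto)
  have posE: "positive (E i)" for i unfolding E_def using F posF by blast
  have bnd: "(\<Sum>i<n. rtr (E i)) + rtr ((F^^n) \<rho>) \<le> rtr \<rho>" for n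
  proof (induction n)
    case 0 then show ?case by simp
  next
    case (Suc n)
    have "rtr (F ((F^^n) \<rho>)) + rtr (E n) \<le> rtr ((F^^n) \<rho>)" unfolding E_def using F posF by blast
    then show ?case using Suc by simp
  qed
  have bnd2: "(\<Sum>i<n. rtr (E i)) \<le> rtr \<rho>" for n
    using bnd[of n] rtr_nonneg[OF posF[of n]] by linarith
  have sumtr: "summable (\<lambda>i. rtr (E i))"
    by (rule summableI_nonneg_bounded[where x="rtr \<rho>"]) (use rtr_nonneg[OF posE] bnd2 in auto)
  have sument: "summable (\<lambda>i. E i s s')" for s s'
    by (rule summable_comparison_test'[OF sumtr]) (use entry_le_rtr[OF posE] in auto)
  have WE: "W = (\<lambda>s s'. \<Sum>i. E i s s')" unfolding W_def E_def by simp
  have sfW: "sf W v v = (\<Sum>i. sf (E i) v v)" and sumsf: "summable (\<lambda>i. sf (E i) v v)" for v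
  proof -
    have "sf W v v = (\<Sum>s\<in>UNIV. \<Sum>s'\<in>UNIV. \<Sum>i. cnj (v s) * E i s s' * v s')"
    proof -
      have "cnj (v s) * (\<Sum>i. E i s s') * v s' = (\<Sum>i. cnj (v s) * E i s s' * v s')" for s s'
      proof -
        have s1: "summable (\<lambda>i. cnj (v s) * E i s s')" using summable_mult[OF sument[of s s']] .
        have "(\<Sum>i. cnj (v s) * E i s s') * v s' = (\<Sum>i. cnj (v s) * E i s s' * v s')"
          using s1 by (rule suminf_mult2)
        moreover have "(\<Sum>i. cnj (v s) * E i s s') = cnj (v s) * (\<Sum>i. E i s s')"
          using sument[of s s'] by (rule suminf_mult)
        ultimately show ?thesis by simp
      qed
      then show ?thesis unfolding sf_def WE by simp
    qed
    also have "\<dots> = (\<Sum>s\<in>UNIV. \<Sum>i. \<Sum>s'\<in>UNIV. cnj (v s) * E i s s' * v s')"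
      by (subst suminf_sum) (auto intro!: summable_mult2 summable_mult sument)
    also have "\<dots> = (\<Sum>i. \<Sum>s\<in>UNIV. \<Sum>s'\<in>UNIV. cnj (v s) * E i s s' * v s')"
      by (subst suminf_sum) (auto intro!: summable_sum summable_mult2 summable_mult sument)
    finally show "sf W v v = (\<Sum>i. sf (E i) v v)" unfolding sf_def .
    show "summable (\<lambda>i. sf (E i) v v)" unfolding sf_def
      by (auto intro!: summable_sum summable_mult2 summable_mult sument)
  qed
  have "positive W" unfolding positive_sf
  proof
    fix v
    have "Im (sf W v v) = (\<Sum>i. Im (sf (E i) v v))" unfolding sfW using Im_suminf[OF sumsf] by simp
    also have "\<dots> = 0"
    proof -
      have "Im (sf (E i) v v) = 0" for i using pos_sf[OF posE[of i]] by blast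
      then show ?thesis by simp
    qed
    finally have "Im (sf W v v) = 0" .
    moreover have "Re (sf W v v) = (\<Sum>i. Re (sf (E i) v v))" unfolding sfW using Re_suminf[OF sumsf] by simp
    moreover have "(\<Sum>i. Re (sf (E i) v v)) \<ge> 0"
      by (rule suminf_nonneg) (use summable_Re[OF sumsf] posE pos_sf in auto)
    ultimately show "Im (sf W v v) = 0 \<and> 0 \<le> Re (sf W v v)" by simp
  qed
  moreover have "rtr W \<le> rtr \<rho>"
  proof -
    have "mtrace W = (\<Sum>i. mtrace (E i))"
      unfolding WE mtrace_def by (subst suminf_sum) (auto intro: sument)
    then have "rtr W = (\<Sum>i. rtr (E i))"
      unfolding rtr_def using Re_suminf[of "\<lambda>i. mtrace (E i)"] summable_sum sument
      by (simp add: mtrace_def summable_sum sument)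
    also have "\<dots> \<le> rtr \<rho>" by (rule suminf_le_const[OF sumtr bnd2])
    finally show ?thesis .
  qed
  moreover have "(\<lambda>s s'. \<Sum>i. G ((F^^i) (mscale (of_real c) \<rho>)) s s') = mscale (of_real c) W" if c: "c \<ge> 0" for c
  proof -
    have Fi: "(F^^i) (mscale (of_real c) \<rho>) = mscale (of_real c) ((F^^i) \<rho>)" for i
      by (induction i) (use F posF c in auto)
    have GE: "G ((F^^i) (mscale (of_real c) \<rho>)) s s' = of_real c * E i s s'" for i s s'
      unfolding Fi G E_def by (simp add: mscale_def)
    show ?thesis unfolding WE GE
    proof (intro ext)
      fix s s'
      show "(\<Sum>i. of_real c * E i s s') = mscale (of_real c) (\<lambda>s s'. \<Sum>i. E i s s') s s'"
        unfolding mscale_def using sument[of s s'] by (simp add: suminf_mult)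
    qed
  qed
  ultimately show ?thesis by blast
qed


lemma sem_props:
  fixes S :: "('v::finite) prog"
  assumes "wf_prog S"
  shows "positive \<rho> \<Longrightarrow> positive (sem S \<rho>) \<and> rtr (sem S \<rho>) \<le> rtr \<rho> \<and>
     (\<forall>c\<ge>0. sem S (mscale (of_real c) \<rho>) = mscale (of_real c) (sem S \<rho>))"
  using assms
proof (induction S arbitrary: \<rho>)
  case Skip then show ?case by simp
next
  case (Init qs)
  note ip = init_props[OF Init(1), of qs]
  show ?case using ip by simp
next
  case (Apply qs U)
  have u: "unitary_on (set qs) U" using Apply(2) by simp
  note ap = apply_props[OF u Apply(1)]
  show ?case using ap by (simp add: conj_mscale)
next
  case (Assert qs P)
  have p: "projector_on (set qs) P" using Assert(2) by simp
  note ap = assert_props[OF p Assert(1)]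
  have "rtr (sem_assert qs (orth (set qs) P) \<rho>) \<ge> 0" by (rule rtr_nonneg[OF ap(2)])
  then show ?case using ap by (simp add: assert_scale)
next
  case (Seq S0 S1)
  have w: "wf_prog S0" "wf_prog S1" using Seq(4) by auto
  note h0 = Seq(1)[OF Seq(3) w(1)]
  note h1 = Seq(2)[OF conjunct1[OF h0] w(2)]
  show ?case
  proof (intro conjI allI impI)
    show "positive (sem (Seq S0 S1) \<rho>)" using h1 by simp
    show "rtr (sem (Seq S0 S1) \<rho>) \<le> rtr \<rho>" using h0 h1 by simp
    fix c :: real assume c: "c \<ge> 0"
    have "sem S0 (mscale (of_real c) \<rho>) = mscale (of_real c) (sem S0 \<rho>)" using h0 c by blast
    moreover have "sem S1 (mscale (of_real c) (sem S0 \<rho>)) = mscale (of_real c) (sem S1 (sem S0 \<rho>))" using h1 c by blast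
    ultimately show "sem (Seq S0 S1) (mscale (of_real c) \<rho>) = mscale (of_real c) (sem (Seq S0 S1) \<rho>)" by simp
  qed
next
  case (If qs P S1 S0)
  have wf: "projector_on (set qs) P" "wf_prog S1" "wf_prog S0" using If by auto
  note a = assert_props[OF wf(1) If(3)]
  have i1: "positive (sem S1 (sem_assert qs P \<rho>)) \<and> rtr (sem S1 (sem_assert qs P \<rho>)) \<le> rtr (sem_assert qs P \<rho>)
     \<and> (\<forall>c\<ge>0. sem S1 (mscale (of_real c) (sem_assert qs P \<rho>)) = mscale (of_real c) (sem S1 (sem_assert qs P \<rho>)))"
    using If(1)[OF a(1) wf(2)] .
  have i0: "positive (sem S0 (sem_assert qs (orth (set qs) P) \<rho>)) \<and> rtr (sem S0 (sem_assert qs (orth (set qs) P) \<rho>)) \<le> rtr (sem_assert qs (orth (set qs) P) \<rho>)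
     \<and> (\<forall>c\<ge>0. sem S0 (mscale (of_real c) (sem_assert qs (orth (set qs) P) \<rho>)) = mscale (of_real c) (sem S0 (sem_assert qs (orth (set qs) P) \<rho>)))"
    using If(2)[OF a(2) wf(3)] .
  show ?case using i1 i0 a(3) by (auto simp: positive_madd rtr_madd assert_scale madd_mscale)
next
  case (While qs P S)
  have wf: "projector_on (set qs) P" "wf_prog S" using While by auto
  let ?F = "\<lambda>\<sigma>. sem S (sem_assert qs P \<sigma>)"
  let ?G = "sem_assert qs (orth (set qs) P)"
  have F: "positive (?F \<sigma>) \<and> positive (?G \<sigma>) \<and> rtr (?F \<sigma>) + rtr (?G \<sigma>) \<le> rtr \<sigma>
       \<and> (\<forall>c\<ge>0. ?F (mscale (of_real c) \<sigma>) = mscale (of_real c) (?F \<sigma>))" if "positive \<sigma>" for \<sigma>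
  proof -
    note a = assert_props[OF wf(1) that]
    have "positive (?F \<sigma>) \<and> rtr (?F \<sigma>) \<le> rtr (sem_assert qs P \<sigma>) \<and>
      (\<forall>c\<ge>0. sem S (mscale (of_real c) (sem_assert qs P \<sigma>)) = mscale (of_real c) (?F \<sigma>))"
      using While(1)[OF a(1) wf(2)] .
    then show ?thesis using a by (auto simp: assert_scale)
  qed
  have G: "?G (mscale c \<sigma>) = mscale c (?G \<sigma>)" for \<sigma> c by (rule assert_scale)
  have "sem (While qs P S) \<rho> = (\<lambda>s s'. \<Sum>i. ?G ((?F^^i) \<rho>) s s')" by simp
  moreover have "sem (While qs P S) (mscale (of_real c) \<rho>) = (\<lambda>s s'. \<Sum>i. ?G ((?F^^i) (mscale (of_real c) \<rho>)) s s')" for c by simp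
  ultimately show ?case using while_props[of ?F ?G \<rho>, OF F G While(2)] by simp
qed


lemma alpha_sup:
  fixes \<alpha> :: "('v::finite) mat set \<Rightarrow> 'a::complete_lattice"
  assumes "galois_embedding \<alpha> \<gamma>" "C \<subseteq> pdo"
  shows "\<alpha> C = (SUP x\<in>C. \<alpha> {x})"
proof (rule antisym)
  have adj0: "\<forall>c a. c \<subseteq> pdo \<longrightarrow> (c \<subseteq> \<gamma> a \<longleftrightarrow> \<alpha> c \<le> a)" using assms(1) unfolding galois_embedding_def by (elim conjE) assumption
  have mono0: "\<forall>c1 c2. c1 \<subseteq> c2 \<and> c2 \<subseteq> pdo \<longrightarrow> \<alpha> c1 \<le> \<alpha> c2" using assms(1) unfolding galois_embedding_def by (elim conjE) assumption
  have adj: "\<And>c a. c \<subseteq> pdo \<Longrightarrow> (c \<subseteq> \<gamma> a \<longleftrightarrow> \<alpha> c \<le> a)" using adj0 by blast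
  have mono: "\<And>c1 c2. c1 \<subseteq> c2 \<Longrightarrow> c2 \<subseteq> pdo \<Longrightarrow> \<alpha> c1 \<le> \<alpha> c2" using mono0 by blast
  have "C \<subseteq> \<gamma> (SUP x\<in>C. \<alpha> {x})"
  proof
    fix x assume x: "x \<in> C"
    have "\<alpha> {x} \<le> (SUP x\<in>C. \<alpha> {x})" using x by (rule SUP_upper)
    moreover have "{x} \<subseteq> pdo" using x assms(2) by auto
    ultimately have "{x} \<subseteq> \<gamma> (SUP x\<in>C. \<alpha> {x})" using adj[of "{x}" "SUP x\<in>C. \<alpha> {x}"] by simp
    then show "x \<in> \<gamma> (SUP x\<in>C. \<alpha> {x})" by simp
  qed
  then show "\<alpha> C \<le> (SUP x\<in>C. \<alpha> {x})" using adj[OF assms(2), of "SUP x\<in>C. \<alpha> {x}"] by simp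
  show "(SUP x\<in>C. \<alpha> {x}) \<le> \<alpha> C"
  proof (rule SUP_least)
    fix x assume "x \<in> C"
    then show "\<alpha> {x} \<le> \<alpha> C" using mono[of "{x}" C] assms(2) by simp
  qed
qed

lemma rtr_mscale: "rtr (mscale (complex_of_real t) (A::('v::finite) mat)) = t * rtr A"
  unfolding rtr_def by (simp add: mtrace_mscale)

lemma pdo_scale:
  fixes \<tau> :: "('v::finite) mat"
  assumes "\<tau> \<in> pdo" "0 \<le> t" "t \<le> 1"
  shows "mscale (complex_of_real t) \<tau> \<in> pdo"
proof -
  have p: "positive \<tau>" "rtr \<tau> \<le> 1" using assms(1) unfolding pdo_def rtr_def by auto
  have "t * rtr \<tau> \<le> 1" by (rule mult_le_one[OF assms(3) rtr_nonneg[OF p(1)] p(2)])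
  then show ?thesis using positive_mscale[OF p(1) assms(2)] unfolding pdo_def
    using rtr_mscale[of t \<tau>] unfolding rtr_def by simp
qed

lemma mzero_pdo: "(mzero :: ('v::finite) mat) \<in> pdo"
  unfolding pdo_def using positive_mzero by (simp add: mtrace_def mzero_def)


lemma alpha_scale:
  fixes \<alpha> :: "('v::finite) mat set \<Rightarrow> 'a::complete_lattice"
  assumes ws: "well_structured \<alpha> \<gamma>" and \<tau>: "\<tau> \<in> pdo" and t: "0 < t" "t \<le> 1"
  shows "\<alpha> {mscale (complex_of_real t) \<tau>} = \<alpha> {\<tau>}"
proof -
  have W: "\<And>(I::nat set) \<rho>s (x::nat \<Rightarrow> real). finite I \<Longrightarrow> I \<noteq> {} \<Longrightarrow>
        (\<forall>i\<in>I. \<rho>s i \<in> pdo \<and> x i > 0) \<Longrightarrow>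
        msum I (\<lambda>i. mscale (complex_of_real (x i)) (\<rho>s i)) \<in> pdo \<Longrightarrow>
        \<alpha> {msum I (\<lambda>i. mscale (complex_of_real (x i)) (\<rho>s i))} = (SUP i\<in>I. \<alpha> {\<rho>s i})"
  proof -
    have W0: "\<forall>(I::nat set) (\<rho>s::nat \<Rightarrow> 'v mat) (x::nat \<Rightarrow> real). finite I \<and> I \<noteq> {} \<and>
        (\<forall>i\<in>I. \<rho>s i \<in> pdo \<and> x i > 0) \<and>
        msum I (\<lambda>i. mscale (complex_of_real (x i)) (\<rho>s i)) \<in> pdo \<longrightarrow>
        \<alpha> {msum I (\<lambda>i. mscale (complex_of_real (x i)) (\<rho>s i))} = (SUP i\<in>I. \<alpha> {\<rho>s i})"
      using ws unfolding well_structured_def by (elim conjE) assumption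
    fix I :: "nat set" and \<rho>s :: "nat \<Rightarrow> 'v mat" and x :: "nat \<Rightarrow> real"
    assume "finite I" "I \<noteq> {}" "\<forall>i\<in>I. \<rho>s i \<in> pdo \<and> x i > 0" "msum I (\<lambda>i. mscale (complex_of_real (x i)) (\<rho>s i)) \<in> pdo"
    then show "\<alpha> {msum I (\<lambda>i. mscale (complex_of_real (x i)) (\<rho>s i))} = (SUP i\<in>I. \<alpha> {\<rho>s i})"
      using W0 by blast
  qed
  have ms: "msum {0::nat} (\<lambda>i. mscale (complex_of_real t) \<tau>) = mscale (complex_of_real t) \<tau>"
    unfolding msum_def by simp
  have "mscale (complex_of_real t) \<tau> \<in> pdo" using pdo_scale[OF \<tau>] t by simp
  then show ?thesis using W[of "{0}" "\<lambda>_. \<tau>" "\<lambda>_. t"] \<tau> t ms by simp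
qed

lemma alpha_zero:
  fixes \<alpha> :: "('v::finite) mat set \<Rightarrow> 'a::complete_lattice"
  assumes ws: "well_structured \<alpha> \<gamma>" and \<tau>: "\<tau> \<in> pdo"
  shows "\<alpha> {mzero} \<le> \<alpha> {\<tau>}"
proof -
  have W: "\<And>(I::nat set) \<rho>s (x::nat \<Rightarrow> real). finite I \<Longrightarrow> I \<noteq> {} \<Longrightarrow>
        (\<forall>i\<in>I. \<rho>s i \<in> pdo \<and> x i > 0) \<Longrightarrow>
        msum I (\<lambda>i. mscale (complex_of_real (x i)) (\<rho>s i)) \<in> pdo \<Longrightarrow>
        \<alpha> {msum I (\<lambda>i. mscale (complex_of_real (x i)) (\<rho>s i))} = (SUP i\<in>I. \<alpha> {\<rho>s i})"
  proof -
    have W0: "\<forall>(I::nat set) (\<rho>s::nat \<Rightarrow> 'v mat) (x::nat \<Rightarrow> real). finite I \<and> I \<noteq> {} \<and>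
        (\<forall>i\<in>I. \<rho>s i \<in> pdo \<and> x i > 0) \<and>
        msum I (\<lambda>i. mscale (complex_of_real (x i)) (\<rho>s i)) \<in> pdo \<longrightarrow>
        \<alpha> {msum I (\<lambda>i. mscale (complex_of_real (x i)) (\<rho>s i))} = (SUP i\<in>I. \<alpha> {\<rho>s i})"
      using ws unfolding well_structured_def by (elim conjE) assumption
    fix I :: "nat set" and \<rho>s :: "nat \<Rightarrow> 'v mat" and x :: "nat \<Rightarrow> real"
    assume "finite I" "I \<noteq> {}" "\<forall>i\<in>I. \<rho>s i \<in> pdo \<and> x i > 0" "msum I (\<lambda>i. mscale (complex_of_real (x i)) (\<rho>s i)) \<in> pdo"
    then show "\<alpha> {msum I (\<lambda>i. mscale (complex_of_real (x i)) (\<rho>s i))} = (SUP i\<in>I. \<alpha> {\<rho>s i})"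
      using W0 by blast
  qed
  define \<rho>s where "\<rho>s = (\<lambda>i::nat. if i = 0 then \<tau> else mzero)"
  have ms: "msum {0::nat, 1} (\<lambda>i. mscale (complex_of_real 1) (\<rho>s i)) = \<tau>"
    unfolding msum_def \<rho>s_def mscale_def mzero_def by simp
  have "\<alpha> {\<tau>} = (SUP i\<in>{0::nat,1}. \<alpha> {\<rho>s i})"
    using W[of "{0,1}" \<rho>s "\<lambda>_. 1"] \<tau> mzero_pdo ms unfolding \<rho>s_def by auto
  also have "\<dots> = sup (\<alpha> {\<tau>}) (\<alpha> {mzero})" unfolding \<rho>s_def by simp
  finally show ?thesis by (metis sup.cobounded2)
qed


lemma part2:
  fixes \<rho> :: "('v::finite) mat" and \<alpha> :: "'v mat set \<Rightarrow> 'a::complete_lattice"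
  assumes \<rho>: "\<rho> \<in> pdo" and hS: "\<forall>\<sigma>\<in>pdo. sem S\<rho> \<sigma> = mscale (mtrace \<sigma>) \<rho>"
    and ws: "well_structured \<alpha> \<gamma>" and wfS: "wf_prog S" and R: "R \<subseteq> pdo" and ne: "\<exists>\<sigma>\<in>R. \<sigma> \<noteq> mzero"
  shows "\<alpha> (sem (Seq S\<rho> S) ` R) = \<alpha> (sem S ` {\<rho>})"
proof -
  have ge: "galois_embedding \<alpha> \<gamma>" using ws unfolding well_structured_def by (elim conjE)
  have p\<rho>: "positive \<rho>" "rtr \<rho> \<le> 1" using \<rho> unfolding pdo_def rtr_def by auto
  define \<tau> where "\<tau> = sem S \<rho>"
  note sp = sem_props[OF wfS p\<rho>(1)]
  have \<tau>pdo: "\<tau> \<in> pdo" using sp p\<rho>(2) unfolding \<tau>_def pdo_def rtr_def by auto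
  have img: "sem (Seq S\<rho> S) \<sigma> = mscale (complex_of_real (rtr \<sigma>)) \<tau>" if "\<sigma> \<in> R" for \<sigma>
  proof -
    have s: "\<sigma> \<in> pdo" using that R by auto
    then have ps: "positive \<sigma>" unfolding pdo_def by simp
    have "sem (Seq S\<rho> S) \<sigma> = sem S (mscale (complex_of_real (rtr \<sigma>)) \<rho>)"
      using hS s mtrace_real[OF ps] by simp
    also have "\<dots> = mscale (complex_of_real (rtr \<sigma>)) \<tau>" using sp rtr_nonneg[OF ps] unfolding \<tau>_def by blast
    finally show ?thesis .
  qed
  have trb: "0 \<le> rtr \<sigma> \<and> rtr \<sigma> \<le> 1" if "\<sigma> \<in> R" for \<sigma>
    using that R rtr_nonneg unfolding pdo_def rtr_def by auto
  have sub: "sem (Seq S\<rho> S) ` R \<subseteq> pdo" using img trb pdo_scale[OF \<tau>pdo] by auto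
  have "\<alpha> (sem (Seq S\<rho> S) ` R) = (SUP x\<in>sem (Seq S\<rho> S) ` R. \<alpha> {x})" by (rule alpha_sup[OF ge sub])
  also have "\<dots> = (SUP \<sigma>\<in>R. \<alpha> {sem (Seq S\<rho> S) \<sigma>})" by (simp add: image_comp)
  also have "\<dots> = \<alpha> {\<tau>}"
  proof (rule antisym)
    show "(SUP \<sigma>\<in>R. \<alpha> {sem (Seq S\<rho> S) \<sigma>}) \<le> \<alpha> {\<tau>}"
    proof (rule SUP_least)
      fix \<sigma> assume s: "\<sigma> \<in> R"
      show "\<alpha> {sem (Seq S\<rho> S) \<sigma>} \<le> \<alpha> {\<tau>}"
      proof (cases "rtr \<sigma> = 0")
        case True
        have "mscale (complex_of_real (rtr \<sigma>)) \<tau> = mzero" using True unfolding mscale_def mzero_def by simp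
        then show ?thesis using img[OF s] alpha_zero[OF ws \<tau>pdo] by simp
      next
        case False
        then show ?thesis using img[OF s] alpha_scale[OF ws \<tau>pdo, of "rtr \<sigma>"] trb[OF s] by simp
      qed
    qed
    obtain \<sigma> where s: "\<sigma> \<in> R" "\<sigma> \<noteq> mzero" using ne by blast
    have ps: "positive \<sigma>" using s R unfolding pdo_def by auto
    have "rtr \<sigma> \<noteq> 0" using rtr_zero[OF ps] s(2) by auto
    then have "\<alpha> {sem (Seq S\<rho> S) \<sigma>} = \<alpha> {\<tau>}" using img[OF s(1)] alpha_scale[OF ws \<tau>pdo, of "rtr \<sigma>"] trb[OF s(1)] by simp
    then show "\<alpha> {\<tau>} \<le> (SUP \<sigma>\<in>R. \<alpha> {sem (Seq S\<rho> S) \<sigma>})" by (metis SUP_upper s(1))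
  qed
  finally show ?thesis unfolding \<tau>_def by simp
qed


definition outer :: "('v::finite bst \<Rightarrow> complex) \<Rightarrow> ('v bst \<Rightarrow> complex) \<Rightarrow> 'v mat" where
  "outer x y = (\<lambda>s s'. x s * cnj (y s'))"

definition dlt :: "'v bst \<Rightarrow> 'v bst \<Rightarrow> complex" where
  "dlt k = (\<lambda>x. if x = k then 1 else 0)"

lemma mvec_diff: "mvec A (\<lambda>x. v x - \<mu> * d x) = (\<lambda>s. mvec A v s - \<mu> * mvec A d s)"
  unfolding mvec_def by (rule ext) (simp add: right_diff_distrib sum_subtractf sum_distrib_left mult.left_commute)

lemma ip_diff: "ip (\<lambda>x. v x - \<mu> * d x) y = ip v y - cnj \<mu> * ip d y"
  unfolding ip_def by (simp add: left_diff_distrib sum_subtractf sum_distrib_left mult.assoc)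

lemma ip_diff2: "ip v (\<lambda>x. y x - \<mu> * z x) = ip v y - \<mu> * ip v z"
  unfolding ip_def by (simp add: right_diff_distrib sum_subtractf sum_distrib_left mult.left_commute)

lemma sf_lin: "sf A (\<lambda>x. v x - \<mu> * d x) (\<lambda>x. v x - \<mu> * d x)
   = sf A v v - \<mu> * sf A v d - cnj \<mu> * sf A d v + cnj \<mu> * \<mu> * sf A d d"
  unfolding sf_ip mvec_diff ip_diff ip_diff2 by (simp add: algebra_simps)

lemma sf_msub: "sf (msub A B) u v = sf A u v - sf B u v"
  unfolding sf_def msub_def by (simp add: algebra_simps sum_subtractf)

lemma ip_dlt: "ip (dlt k) y = y (k::('v::finite) bst)"
  unfolding ip_def dlt_def by simp

lemma mvec_dlt: "mvec A (dlt k) = (\<lambda>s. A s (k::('v::finite) bst))"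
  unfolding mvec_def dlt_def by (rule ext) simp

lemma ip_cnj: "ip v c = cnj (ip c v)"
  unfolding ip_def by (simp add: mult.commute)

lemma sf_outer: "sf (outer c c) v v = cnj (ip c v) * ip c v"
proof -
  have "mvec (outer c c) v = (\<lambda>s. c s * ip c v)"
    unfolding mvec_def outer_def ip_def by (rule ext) (simp add: sum_distrib_left mult.assoc)
  then have "sf (outer c c) v v = ip v c * ip c v"
    unfolding sf_ip by (simp add: ip_def sum_distrib_right mult.assoc mult.left_commute)
  then show ?thesis by (simp add: ip_cnj[of v c])
qed

lemma schur_pos:
  fixes \<rho> :: "('v::finite) mat"
  assumes pos: "positive \<rho>" and r: "Re (\<rho> k k) > 0"
  defines "c \<equiv> (\<lambda>s. \<rho> s k / complex_of_real (sqrt (Re (\<rho> k k))))"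
  shows "positive (msub \<rho> (outer c c))"
  unfolding positive_sf
proof
  fix v
  define r where "r = Re (\<rho> k k)"
  have kk: "\<rho> k k = of_real r" unfolding r_def by (rule complex_eqI) (use pos_diag[OF pos, of k] in simp_all)
  define p where "p = (\<Sum>s'\<in>UNIV. \<rho> k s' * v s')"
  define \<mu> where "\<mu> = p / of_real r"
  have sr: "complex_of_real (sqrt r) * complex_of_real (sqrt r) = of_real r"
  proof -
    have "sqrt r * sqrt r = r" using r unfolding r_def by simp
    then show ?thesis by (metis of_real_mult)
  qed
  have ipc: "ip c v = p / of_real (sqrt r)"
  proof -
    have "ip c v = (\<Sum>s\<in>UNIV. cnj (\<rho> s k) * v s) / of_real (sqrt r)"
      unfolding ip_def c_def r_def by (simp add: sum_divide_distrib)
    also have "(\<Sum>s\<in>UNIV. cnj (\<rho> s k) * v s) = p"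
    proof -
      have "cnj (\<rho> s k) = \<rho> k s" for s using pos_herm[OF pos, of k s] by simp
      then show ?thesis unfolding p_def by simp
    qed
    finally show ?thesis .
  qed
  have so: "sf (outer c c) v v = cnj p * p / of_real r"
    unfolding sf_outer ipc using sr by (simp add: field_simps)
  have s1: "sf \<rho> (dlt k) v = p" unfolding sf_ip ip_dlt p_def mvec_def by simp
  have s2: "sf \<rho> v (dlt k) = cnj p"
  proof -
    have "sf \<rho> v (dlt k) = (\<Sum>s\<in>UNIV. cnj (v s) * \<rho> s k)" unfolding sf_ip mvec_dlt ip_def by simp
    also have "\<dots> = cnj p" unfolding p_def using pos_herm[OF pos, of k] by (simp add: mult.commute)
    finally show ?thesis .
  qed
  have s3: "sf \<rho> (dlt k) (dlt k) = of_real r" unfolding sf_ip ip_dlt mvec_dlt kk by simp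
  have rn: "(of_real r :: complex) \<noteq> 0" using r r_def by simp
  have "sf \<rho> (\<lambda>x. v x - \<mu> * dlt k x) (\<lambda>x. v x - \<mu> * dlt k x) = sf \<rho> v v - cnj p * p / of_real r"
    unfolding sf_lin s1 s2 s3 \<mu>_def using rn by (simp add: field_simps)
  also have "\<dots> = sf (msub \<rho> (outer c c)) v v" unfolding sf_msub so ..
  finally have eq: "sf (msub \<rho> (outer c c)) v v = sf \<rho> (\<lambda>x. v x - \<mu> * dlt k x) (\<lambda>x. v x - \<mu> * dlt k x)" by simp
  show "Im (sf (msub \<rho> (outer c c)) v v) = 0 \<and> 0 \<le> Re (sf (msub \<rho> (outer c c)) v v)"
    unfolding eq by (rule pos_sf[OF pos])
qed


lemma outer_zero: "outer (\<lambda>_. 0) (\<lambda>_. 0) = (\<lambda>s s'. 0)"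
  unfolding outer_def by simp

lemma chol_aux:
  fixes K :: "('v::finite) bst set"
  assumes "finite K"
  shows "\<forall>\<rho>. positive \<rho> \<longrightarrow> (\<forall>s s'. s \<notin> K \<longrightarrow> \<rho> s s' = 0) \<longrightarrow> (\<exists>a. \<rho> = msum K (\<lambda>k. outer (a k) (a k)))"
  using assms
proof (induction K rule: finite_induct)
  case empty
  show ?case
  proof (intro allI impI)
    fix \<rho> :: "'v mat"
    assume "\<forall>s s'. s \<notin> {} \<longrightarrow> \<rho> s s' = 0"
    then have "\<rho> = msum {} (\<lambda>k. outer (\<lambda>_. 0) (\<lambda>_. 0))" unfolding msum_def by (intro ext) simp
    then show "\<exists>a. \<rho> = msum {} (\<lambda>k. outer (a k) (a k))" by (intro exI[where x="\<lambda>k _. 0"])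
  qed
next
  case (insert k K)
  show ?case
  proof (intro allI impI)
    fix \<rho> :: "'v mat"
    assume pos: "positive \<rho>" and z: "\<forall>s s'. s \<notin> insert k K \<longrightarrow> \<rho> s s' = 0"
    show "\<exists>a. \<rho> = msum (insert k K) (\<lambda>k. outer (a k) (a k))"
    proof (cases "\<rho> k k = 0")
      case True
      have "\<forall>s s'. s \<notin> K \<longrightarrow> \<rho> s s' = 0" using z pos_zero_row[where A=\<rho> and k=k, OF pos True] by (metis insert_iff)
      then obtain a where a: "\<rho> = msum K (\<lambda>k. outer (a k) (a k))" using insert(3) pos by blast
      define a' where "a' = a(k := (\<lambda>_. 0))"
      have e1: "msum (insert k K) (\<lambda>j. outer (a' j) (a' j)) = madd (outer (a' k) (a' k)) (msum K (\<lambda>j. outer (a' j) (a' j)))"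
        unfolding msum_def madd_def using insert(1,2) by (intro ext) simp
      have e2: "msum K (\<lambda>j. outer (a' j) (a' j)) = msum K (\<lambda>j. outer (a j) (a j))"
        by (rule msum_cong) (use insert(2) in \<open>auto simp: a'_def\<close>)
      have "msum (insert k K) (\<lambda>j. outer (a' j) (a' j)) = msum K (\<lambda>j. outer (a j) (a j))"
        unfolding e1 e2 unfolding a'_def madd_def outer_def by simp
      then show ?thesis using a by (intro exI[of _ a']) simp
    next
      case False
      have r: "Re (\<rho> k k) > 0"
      proof -
        have d: "Im (\<rho> k k) = 0" "Re (\<rho> k k) \<ge> 0" by (rule pos_diag[OF pos])+
        moreover have "Re (\<rho> k k) \<noteq> 0" using False d by (simp add: complex_eq_iff)
        ultimately show ?thesis by simp
      qed
      define c where "c = (\<lambda>s. \<rho> s k / complex_of_real (sqrt (Re (\<rho> k k))))"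
      have pos': "positive (msub \<rho> (outer c c))" unfolding c_def by (rule schur_pos[where \<rho>=\<rho> and k=k, OF pos r])
      have kk: "\<rho> k k = of_real (Re (\<rho> k k))" by (rule complex_eqI) (use pos_diag[OF pos, of k] in simp_all)
      have sr: "complex_of_real (sqrt (Re (\<rho> k k))) * complex_of_real (sqrt (Re (\<rho> k k))) = of_real (Re (\<rho> k k))"
      proof -
        have "sqrt (Re (\<rho> k k)) * sqrt (Re (\<rho> k k)) = Re (\<rho> k k)" using r by simp
        then show ?thesis by (metis of_real_mult)
      qed
      have z': "\<forall>s s'. s \<notin> K \<longrightarrow> msub \<rho> (outer c c) s s' = 0"
      proof (intro allI impI)
        fix s s' assume s: "s \<notin> K"
        show "msub \<rho> (outer c c) s s' = 0"
        proof (cases "s = k")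
          case True
          have h: "cnj (\<rho> s' k) = \<rho> k s'" using pos_herm[OF pos, of s' k] by simp
          have "msub \<rho> (outer c c) k s' = \<rho> k s' - \<rho> k k * \<rho> k s' / (complex_of_real (sqrt (Re (\<rho> k k))) * complex_of_real (sqrt (Re (\<rho> k k))))"
            unfolding msub_def outer_def c_def using h by simp
          also have "\<dots> = 0" unfolding sr using r by (subst kk) simp
          finally show ?thesis using True by simp
        next
          case False
          then have "s \<notin> insert k K" using s by simp
          then show ?thesis using z unfolding msub_def outer_def c_def by simp
        qed
      qed
      obtain a where a: "msub \<rho> (outer c c) = msum K (\<lambda>k. outer (a k) (a k))" using insert(3) pos' z' by blast
      define a' where "a' = a(k := c)"
      have e1: "msum (insert k K) (\<lambda>j. outer (a' j) (a' j)) = madd (outer (a' k) (a' k)) (msum K (\<lambda>j. outer (a' j) (a' j)))"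
        unfolding msum_def madd_def using insert(1,2) by (intro ext) simp
      have e2: "msum K (\<lambda>j. outer (a' j) (a' j)) = msum K (\<lambda>j. outer (a j) (a j))"
        by (rule msum_cong) (use insert(2) in \<open>auto simp: a'_def\<close>)
      have "msum (insert k K) (\<lambda>j. outer (a' j) (a' j)) = madd (outer c c) (msum K (\<lambda>j. outer (a j) (a j)))"
        unfolding e1 e2 unfolding a'_def by simp
      also have "\<dots> = \<rho>" unfolding a[symmetric] madd_def msub_def by simp
      finally show ?thesis by (intro exI[of _ a']) simp
    qed
  qed
qed

lemma chol:
  fixes \<rho> :: "('v::finite) mat"
  assumes "positive \<rho>" shows "\<exists>a. \<rho> = msum (UNIV :: 'v bst set) (\<lambda>k. outer (a k) (a k))"
proof -
  have fin: "finite (UNIV :: 'v bst set)" by simp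
  have h: "\<forall>\<rho>. positive \<rho> \<longrightarrow> (\<forall>s s'. s \<notin> (UNIV::'v bst set) \<longrightarrow> \<rho> s s' = 0) \<longrightarrow> (\<exists>a. \<rho> = msum (UNIV :: 'v bst set) (\<lambda>k. outer (a k) (a k)))"
    by (rule chol_aux[OF fin])
  have "positive \<rho> \<longrightarrow> (\<forall>s s'. s \<notin> (UNIV::'v bst set) \<longrightarrow> \<rho> s s' = 0) \<longrightarrow> (\<exists>a. \<rho> = msum (UNIV :: 'v bst set) (\<lambda>k. outer (a k) (a k)))"
    using h by (rule spec)
  then show ?thesis using assms by simp
qed


lemma ip_sub: "ip (\<lambda>x. v x - d x) y = ip v y - ip d y"
  unfolding ip_def by (simp add: left_diff_distrib sum_subtractf)

lemma ip_sub2: "ip v (\<lambda>x. y x - z x) = ip v y - ip v z"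
  unfolding ip_def by (simp add: right_diff_distrib sum_subtractf)

lemma ip_scale_l: "ip (\<lambda>x. c * v x) y = cnj c * ip v y"
  unfolding ip_def by (simp add: sum_distrib_left mult.assoc)

lemma ip_scale_r: "ip v (\<lambda>x. c * y x) = c * ip v y"
  unfolding ip_def by (simp add: sum_distrib_left mult.left_commute)

lemma ip_self_real: "ip v v = complex_of_real (\<Sum>s\<in>UNIV. (cmod (v s))^2)"
proof -
  have "cnj (v s) * v s = complex_of_real ((cmod (v s))^2)" for s
    by (metis complex_norm_square mult.commute)
  then show ?thesis unfolding ip_def of_real_sum by simp
qed

lemma ip_self_zero:
  fixes v :: "('v::finite) bst \<Rightarrow> complex"
  assumes "ip v v = 0" shows "v = (\<lambda>_. 0)"
proof -
  have "(\<Sum>s\<in>UNIV. (cmod (v s))^2) = 0" using assms ip_self_real[of v] by (metis of_real_eq_0_iff)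
  then have "\<forall>s\<in>UNIV. (cmod (v s))^2 = 0" by (subst sum_nonneg_eq_0_iff[symmetric]) auto
  then show ?thesis by (intro ext) simp
qed

lemma outer_conj: "(M::('v::finite) mat) ** outer x y ** madj N = outer (mvec M x) (mvec N y)"
  unfolding outer_def mmult_def madj_def mvec_def
  by (intro ext) (simp add: sum_distrib_left sum_distrib_right mult.assoc mult.commute mult.left_commute)

lemma mvec_mid: "mvec mid v = (v :: ('v::finite) bst \<Rightarrow> complex)"
  unfolding mvec_def mid_def by (intro ext) (simp add: if_distrib[where f="\<lambda>x. x * _"] cong: if_cong)

lemma mvec_H: "mvec (msub mid (mscale a (outer w w))) (v::('v::finite) bst \<Rightarrow> complex) = (\<lambda>s. v s - a * ip w v * w s)"
proof -
  have "mvec (msub mid (mscale a (outer w w))) v = (\<lambda>s. mvec mid v s - (\<Sum>t\<in>UNIV. a * (w s * cnj (w t)) * v t))"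
    unfolding mvec_def msub_def mscale_def outer_def by (intro ext) (simp add: left_diff_distrib sum_subtractf)
  also have "\<dots> = (\<lambda>s. v s - a * ip w v * w s)"
    unfolding mvec_mid ip_def by (intro ext) (simp add: sum_distrib_left sum_distrib_right mult.assoc mult.commute mult.left_commute)
  finally show ?thesis .
qed

lemma outer_phase: "cnj \<phi> * \<phi> = 1 \<Longrightarrow> outer (\<lambda>s. \<phi> * b s) (\<lambda>s. \<phi> * b s) = outer b b"
  unfolding outer_def by (intro ext) (simp add: algebra_simps)

lemma outer_outer: "outer w w ** outer w w = mscale (ip w w) (outer (w::('v::finite) bst \<Rightarrow> complex) w)"
  unfolding outer_def mmult_def mscale_def ip_def
  by (intro ext) (simp add: sum_distrib_left sum_distrib_right mult.assoc mult.left_commute)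

lemma madj_outer: "madj (outer x y) = outer y x"
  unfolding madj_def outer_def by (intro ext) simp

lemma madj_mscale: "madj (mscale c A) = mscale (cnj c) (madj A)"
  unfolding madj_def mscale_def by (intro ext) simp

lemma idW_UNIV: "idW UNIV = (mid :: ('v::finite) mat)"
  unfolding idW_def mid_def states_def by (intro ext) simp

lemma unitary_UNIV: "(H::('v::finite) mat) ** madj H = mid \<Longrightarrow> madj H ** H = mid \<Longrightarrow> unitary_on UNIV H"
  unfolding unitary_on_def supported_def states_def idW_UNIV by simp

lemma householder:
  fixes e b :: "('v::finite) bst \<Rightarrow> complex"
  assumes e: "ip e e = 1" and b: "ip b b = 1"
  shows "\<exists>H. unitary_on UNIV H \<and> H ** outer e e ** madj H = outer b b"
proof -
  define i0 where "i0 = ip b e"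
  define \<phi> where "\<phi> = (if i0 = 0 then 1 else i0 / of_real (cmod i0))"
  have ph: "cnj \<phi> * \<phi> = 1"
    unfolding \<phi>_def by (auto simp: field_simps) (metis nsq)
  define b' where "b' = (\<lambda>s. \<phi> * b s)"
  have ob: "outer b' b' = outer b b" unfolding b'_def by (rule outer_phase[OF ph])
  define cr where "cr = cmod i0"
  have i1: "ip b' e = of_real cr"
  proof -
    have "ip b' e = cnj \<phi> * i0" unfolding b'_def i0_def by (rule ip_scale_l)
    also have "\<dots> = of_real cr" unfolding \<phi>_def cr_def
      by (auto simp: field_simps) (metis mult.commute nsq)
    finally show ?thesis .
  qed
  have i2: "ip e b' = of_real cr" using i1 ip_cnj[of e b'] by simp
  have i3: "ip b' b' = 1" unfolding b'_def ip_scale_l ip_scale_r using b ph by (simp add: mult.assoc)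
  define w where "w = (\<lambda>s. e s - b' s)"
  have iwe: "ip w e = 1 - of_real cr" unfolding w_def ip_sub e i1 ..
  have iww: "ip w w = of_real (2 - 2 * cr)" unfolding w_def ip_sub ip_sub2 e i1 i2 i3 by simp
  show ?thesis
  proof (cases "cr = 1")
    case True
    then have "ip w w = 0" using iww by simp
    then have "w = (\<lambda>_. 0)" by (rule ip_self_zero)
    then have "e s - b' s = 0" for s unfolding w_def by (metis fun_cong)
    then have eb: "e = b'" by (intro ext) simp
    have "unitary_on UNIV (mid :: 'v mat)" by (rule unitary_UNIV) simp_all
    moreover have "mid ** outer e e ** madj mid = outer b b" using eb ob by simp
    ultimately show ?thesis by blast
  next
    case False
    define \<alpha> where "\<alpha> = complex_of_real (2 / (2 - 2 * cr))"
    have an: "\<alpha> * ip w w = 2" unfolding iww \<alpha>_def using False by (simp add: field_simps)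
    have ae: "\<alpha> * ip w e = 1" unfolding iwe \<alpha>_def using False by (simp add: field_simps)
    define H where "H = msub mid (mscale \<alpha> (outer w w))"
    have cnja: "cnj \<alpha> = \<alpha>" unfolding \<alpha>_def by simp
    have adjH: "madj H = H" unfolding H_def by (simp add: madj_msub madj_mscale madj_outer cnja)
    have HH: "H ** H = mid"
    proof -
      have HH1: "H ** H = msub (msub mid (mscale \<alpha> (outer w w))) (mscale \<alpha> (msub (outer w w) (mscale \<alpha> (mscale (ip w w) (outer w w)))))"
        unfolding H_def by (simp add: mmult_msub_left mmult_msub_right mmult_mscale_left mmult_mscale_right outer_outer)
      have an2: "\<alpha> * (\<alpha> * (ip w w * x)) = 2 * (\<alpha> * x)" for x
      proof -
        have "\<alpha> * (\<alpha> * (ip w w * x)) = (\<alpha> * ip w w) * (\<alpha> * x)" by (simp add: mult.assoc mult.commute mult.left_commute)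
        then show ?thesis by (simp add: an)
      qed
      show ?thesis unfolding HH1 msub_def mscale_def by (intro ext) (simp add: an2 right_diff_distrib)
    qed
    have "unitary_on UNIV H" by (rule unitary_UNIV) (simp_all add: adjH HH)
    moreover have "H ** outer e e ** madj H = outer b b"
    proof -
      have "mvec H e = b'" unfolding H_def mvec_H ae
      proof (intro ext)
        fix s show "e s - 1 * w s = b' s" unfolding w_def by simp
      qed
      moreover have "H ** outer e e ** madj H = outer (mvec H e) (mvec H e)" by (rule outer_conj)
      ultimately show ?thesis using ob by simp
    qed
    ultimately show ?thesis by blast
  qed
qed


fun meas :: "'v list \<Rightarrow> ('v bst \<Rightarrow> 'v mat) \<Rightarrow> 'v bst list \<Rightarrow> 'v prog" where
  "meas qs Hs [] = Skip"
| "meas qs Hs (k # ks) = If qs (ketbra k k) (Apply qs (Hs k)) (meas qs Hs ks)"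

definition zo :: "'v bst set \<Rightarrow> 'v mat \<Rightarrow> 'v mat" where
  "zo K M = (\<lambda>s s'. if s \<in> K \<or> s' \<in> K then 0 else M s s')"

lemma cyl_UNIV: "cyl UNIV A = A"
  unfolding cyl_def restr_def by simp

lemma states_UNIV: "states UNIV = UNIV"
  unfolding states_def by simp

lemma kb_left: "ketbra a b ** M = (\<lambda>s t. if s = a then M b t else 0)"
  unfolding ketbra_def mmult_def
proof (intro ext)
  fix s t
  show "(\<Sum>u\<in>UNIV. (if s = a \<and> u = b then 1 else 0) * M u t) = (if s = a then M b t else 0)"
    by (cases "s = a") simp_all
qed

lemma kb_right: "M ** ketbra c d = (\<lambda>s t. if t = d then M s c else 0)"
  unfolding ketbra_def mmult_def
proof (intro ext)
  fix s t
  show "(\<Sum>u\<in>UNIV. M s u * (if u = c \<and> t = d then 1 else 0)) = (if t = d then M s c else 0)"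
    by (cases "t = d") simp_all
qed

lemma kb_conj: "ketbra a b ** M ** ketbra c (d::('v::finite) bst) = mscale (M b c) (ketbra a d)"
  unfolding kb_left unfolding kb_right unfolding mscale_def ketbra_def by (intro ext) auto

lemma orth_conj: "msub mid (ketbra k k) ** M ** msub mid (ketbra k (k::('v::finite) bst)) = zo {k} M"
  unfolding mmult_msub_left mmult_msub_right mid_mmult mmult_mid kb_left kb_right
  unfolding msub_def zo_def by (intro ext) auto

lemma projector_kb: "projector_on UNIV (ketbra k (k::('v::finite) bst))"
  unfolding projector_on_def supported_def states_UNIV by (simp add: ketbra_mult madj_ketbra)

lemma wf_meas:
  assumes "distinct qs" "set qs = UNIV" "\<And>k. unitary_on UNIV (Hs k)"
  shows "wf_prog (meas qs Hs (ks :: ('v::finite) bst list))"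
  by (induction ks) (use assms projector_kb in auto)

lemma sem_meas:
  fixes ks :: "('v::finite) bst list"
  assumes q: "set qs = UNIV" and d: "distinct ks"
  shows "sem (meas qs Hs ks) M = madd (msum (set ks) (\<lambda>k. mscale (M k k) (Hs k ** ketbra k k ** madj (Hs k)))) (zo (set ks) M)"
  using d
proof (induction ks arbitrary: M)
  case Nil
  show ?case unfolding madd_def msum_def zo_def by (intro ext) simp
next
  case (Cons k ks)
  have nk: "k \<notin> set ks" "distinct ks" using Cons(2) by auto
  have a1: "sem_assert qs (ketbra k k) M = mscale (M k k) (ketbra k k)"
    unfolding sem_assert_def q cyl_UNIV by (rule kb_conj)
  have a2: "sem_assert qs (orth (set qs) (ketbra k k)) M = zo {k} M"
    unfolding sem_assert_def q cyl_UNIV orth_def idW_UNIV by (rule orth_conj)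
  have ih: "sem (meas qs Hs ks) (zo {k} M) = madd (msum (set ks) (\<lambda>j. mscale (zo {k} M j j) (Hs j ** ketbra j j ** madj (Hs j)))) (zo (set ks) (zo {k} M))"
    by (rule Cons(1)[OF nk(2)])
  have e1: "msum (set ks) (\<lambda>j. mscale (zo {k} M j j) (Hs j ** ketbra j j ** madj (Hs j)))
      = msum (set ks) (\<lambda>j. mscale (M j j) (Hs j ** ketbra j j ** madj (Hs j)))"
    by (rule msum_cong) (use nk(1) in \<open>auto simp: zo_def\<close>)
  have e2: "zo (set ks) (zo {k} M) = zo (set (k # ks)) M" unfolding zo_def by (intro ext) auto
  have "sem (meas qs Hs (k # ks)) M = madd (Hs k ** mscale (M k k) (ketbra k k) ** madj (Hs k))
      (madd (msum (set ks) (\<lambda>j. mscale (M j j) (Hs j ** ketbra j j ** madj (Hs j)))) (zo (set (k # ks)) M))"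
    using a1 a2 ih e1 e2 q by (simp add: cyl_UNIV)
  also have "\<dots> = madd (msum (set (k # ks)) (\<lambda>k. mscale (M k k) (Hs k ** ketbra k k ** madj (Hs k)))) (zo (set (k # ks)) M)"
    unfolding conj_mscale using nk(1) unfolding madd_def msum_def by (intro ext) (simp add: algebra_simps)
  finally show ?case .
qed

lemma sem_init_UNIV:
  assumes "set qs = (UNIV :: ('v::finite) set)"
  shows "sem (Init qs) \<sigma> = mscale (mtrace \<sigma>) (ketbra (\<lambda>_. False) (\<lambda>_. False))"
proof -
  have "sem (Init qs) \<sigma> = msum UNIV (\<lambda>i. mscale (\<sigma> i i) (ketbra (\<lambda>_. False) (\<lambda>_. False)))"
    unfolding sem.simps sem_init_def assms cyl_UNIV states_UNIV madj_ketbra kb_conj ..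
  also have "\<dots> = mscale (mtrace \<sigma>) (ketbra (\<lambda>_. False) (\<lambda>_. False))"
    unfolding msum_def mscale_def mtrace_def by (intro ext) (simp add: sum_distrib_right)
  finally show ?thesis .
qed

lemma ketbra_outer: "ketbra a a = outer (dlt a) (dlt a)"
  unfolding ketbra_def outer_def dlt_def by (intro ext) simp

lemma ip_dlt_self: "ip (dlt a) (dlt (a::('v::finite) bst)) = 1"
  unfolding ip_dlt by (simp add: dlt_def)

lemma mtrace_outer: "mtrace (outer x y) = ip y (x::('v::finite) bst \<Rightarrow> complex)"
  unfolding mtrace_def outer_def ip_def by (simp add: mult.commute)


lemma part1:
  fixes \<rho> :: "('v::finite) mat"
  assumes \<rho>: "\<rho> \<in> pdo" and tr: "mtrace \<rho> = 1"
  shows "\<exists>S\<rho>. wf_prog S\<rho> \<and> (\<forall>\<sigma>. sem S\<rho> \<sigma> = mscale (mtrace \<sigma>) \<rho>)"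
proof -
  have pos: "positive \<rho>" using \<rho> unfolding pdo_def by simp
  obtain a where a: "\<rho> = msum (UNIV :: 'v bst set) (\<lambda>k. outer (a k) (a k))" using chol[OF pos] by blast
  obtain qs :: "'v list" where qs: "distinct qs" "set qs = UNIV"
    using finite_distinct_list[of "UNIV :: 'v set"] by auto
  obtain ks :: "'v bst list" where ks: "distinct ks" "set ks = UNIV"
    using finite_distinct_list[of "UNIV :: 'v bst set"] by auto
  define nk where "nk k = sqrt (\<Sum>s\<in>UNIV. (cmod (a k s))^2)" for k
  have nk0: "nk k \<ge> 0" for k unfolding nk_def by (simp add: sum_nonneg)
  have ipa: "ip (a k) (a k) = of_real (nk k ^ 2)" for k
    unfolding ip_self_real nk_def by (simp add: sum_nonneg)
  define w0 where "w0 = (\<lambda>k. complex_of_real (nk k))"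
  have iw0: "ip w0 w0 = 1"
  proof -
    have "ip w0 w0 = (\<Sum>k\<in>UNIV. complex_of_real (nk k ^ 2))"
      unfolding w0_def ip_def by (simp add: power2_eq_square)
    also have "\<dots> = (\<Sum>k\<in>UNIV. ip (a k) (a k))" by (simp add: ipa)
    also have "\<dots> = mtrace \<rho>" unfolding a mtrace_msum mtrace_outer ..
    finally show ?thesis using tr by simp
  qed
  define z :: "'v bst" where "z = (\<lambda>_. False)"
  obtain H0 where H0: "unitary_on UNIV H0" "H0 ** outer (dlt z) (dlt z) ** madj H0 = outer w0 w0"
    using householder[OF ip_dlt_self iw0] by blast
  define u where "u k = (if nk k = 0 then dlt k else (\<lambda>s. a k s / of_real (nk k)))" for k
  have iu: "ip (u k) (u k) = 1" for k
  proof (cases "nk k = 0")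
    case True then show ?thesis unfolding u_def by (simp add: ip_dlt_self)
  next
    case False
    have "ip (u k) (u k) = ip (a k) (a k) / (of_real (nk k) * of_real (nk k))"
      unfolding u_def using False by (simp add: ip_def sum_divide_distrib)
    also have "\<dots> = 1" unfolding ipa using False by (simp add: power2_eq_square)
    finally show ?thesis .
  qed
  have exH: "\<exists>H. unitary_on UNIV H \<and> H ** outer (dlt k) (dlt k) ** madj H = outer (u k) (u k)" for k
    by (rule householder[OF ip_dlt_self iu])
  define Hs where "Hs k = (SOME H. unitary_on UNIV H \<and> H ** outer (dlt k) (dlt k) ** madj H = outer (u k) (u k))" for k
  have Hs: "unitary_on UNIV (Hs k)" "Hs k ** outer (dlt k) (dlt k) ** madj (Hs k) = outer (u k) (u k)" for k
    unfolding Hs_def using someI_ex[OF exH[of k]] by blast+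
  define S where "S = Seq (Init qs) (Seq (Apply qs H0) (meas qs Hs ks))"
  have wf: "wf_prog S" unfolding S_def using qs H0(1) wf_meas[OF qs Hs(1)] by simp
  have "sem S \<sigma> = mscale (mtrace \<sigma>) \<rho>" for \<sigma>
  proof -
    define t where "t = mtrace \<sigma>"
    define M where "M = mscale t (outer w0 w0)"
    have "sem (Seq (Init qs) (Apply qs H0)) \<sigma> = cyl (set qs) H0 ** sem (Init qs) \<sigma> ** madj (cyl (set qs) H0)"
      by (simp only: sem.simps(5) sem.simps(3))
    also have "\<dots> = H0 ** mscale t (outer (dlt z) (dlt z)) ** madj H0"
      unfolding sem_init_UNIV[OF qs(2)] qs(2) cyl_UNIV ketbra_outer z_def t_def ..
    also have "\<dots> = M" unfolding conj_mscale H0(2) M_def ..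
    finally have s1: "sem (Seq (Init qs) (Apply qs H0)) \<sigma> = M" .
    have "sem S \<sigma> = sem (meas qs Hs ks) M" using s1 unfolding S_def by simp
    also have "\<dots> = madd (msum UNIV (\<lambda>k. mscale (M k k) (outer (u k) (u k)))) (zo UNIV M)"
      unfolding sem_meas[OF qs(2) ks(1)] ks(2) ketbra_outer Hs(2) ..
    also have "\<dots> = msum UNIV (\<lambda>k. mscale (M k k) (outer (u k) (u k)))"
      unfolding madd_def zo_def by simp
    also have "\<dots> = msum UNIV (\<lambda>k. mscale t (outer (a k) (a k)))"
    proof (rule msum_cong)
      fix k :: "'v bst"
      have Mkk: "M k k = t * of_real (nk k ^ 2)" unfolding M_def mscale_def outer_def w0_def
        by (simp add: power2_eq_square)
      show "mscale (M k k) (outer (u k) (u k)) = mscale t (outer (a k) (a k))"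
      proof (cases "nk k = 0")
        case True
        then have "ip (a k) (a k) = 0" using ipa by simp
        then have "a k = (\<lambda>_. 0)" by (rule ip_self_zero)
        then show ?thesis unfolding Mkk True mscale_def outer_def by (intro ext) simp
      next
        case False
        then show ?thesis unfolding Mkk mscale_def outer_def u_def
          by (intro ext) (simp add: field_simps power2_eq_square)
      qed
    qed
    also have "\<dots> = mscale t \<rho>" unfolding a by (rule msum_mscale)
    finally show ?thesis unfolding t_def .
  qed
  then show ?thesis using wf by blast
qed

theorem mainTheorem20:
  fixes \<rho> :: "('v::finite) mat"
  assumes "\<rho> \<in> pdo" and "mtrace \<rho> = 1"
  shows "(\<exists>S\<rho>. wf_prog S\<rho> \<and> (\<forall>\<sigma>\<in>pdo. sem S\<rho> \<sigma> = mscale (mtrace \<sigma>) \<rho>)) \<and>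
         (\<forall>S\<rho>. wf_prog S\<rho> \<and> (\<forall>\<sigma>\<in>pdo. sem S\<rho> \<sigma> = mscale (mtrace \<sigma>) \<rho>) \<longrightarrow>
            (\<forall>(\<alpha> :: 'v mat set \<Rightarrow> 'a::complete_lattice) \<gamma> S R.
               well_structured \<alpha> \<gamma> \<longrightarrow> wf_prog S \<longrightarrow> R \<subseteq> pdo \<longrightarrow> (\<exists>\<sigma>\<in>R. \<sigma> \<noteq> mzero) \<longrightarrow>
               \<alpha> (sem (Seq S\<rho> S) ` R) = \<alpha> (sem S ` {\<rho>})))"
proof (intro conjI allI impI)
  show "\<exists>S\<rho>. wf_prog S\<rho> \<and> (\<forall>\<sigma>\<in>pdo. sem S\<rho> \<sigma> = mscale (mtrace \<sigma>) \<rho>)"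
    using part1[OF assms] by blast
next
  fix S\<rho> S :: "'v prog" and R :: "'v mat set" and \<alpha> :: "'v mat set \<Rightarrow> 'a" and \<gamma> :: "'a \<Rightarrow> 'v mat set"
  assume h: "wf_prog S\<rho> \<and> (\<forall>\<sigma>\<in>pdo. sem S\<rho> \<sigma> = mscale (mtrace \<sigma>) \<rho>)"
    and ws: "well_structured \<alpha> \<gamma>" and wfS: "wf_prog S" and R: "R \<subseteq> pdo" and ne: "\<exists>\<sigma>\<in>R. \<sigma> \<noteq> mzero"
  show "\<alpha> (sem (Seq S\<rho> S) ` R) = \<alpha> (sem S ` {\<rho>})"
    by (rule part2[OF assms(1) conjunct2[OF h] ws wfS R ne])
qed


end
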